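(* Each of the following graphs is not strongly EFX-orientable: (i) the union of two odd cycles that share exactly one edge (and no other vertices); (ii) the union of two odd cycles that share exactly one vertex; (iii) the union of two vertex-disjoint odd cycles $C$ and $C'$ together with a path of length at least $1$ from a vertex of $C$ to a vertex of $C'$ whose internal vertices lie on neither cycle.
   Context: All graphs are finite and simple. For a graph $G=(V,E)$ and $v\in V$, $E(v)$ is the set of edges incident to $v$. A graphical instance on $G$ assigns to each vertex $v$ a valuation $f_v:2^E\to\mathbb{R}_{\ge 0}$ that is monotone ($A\subseteq B\Rightarrow f_v(A)\le f_v(B)$) and satisfies $f_v(X)=f_v(X\cap E(v))$ for all $X\subseteq E$. An orientation of $G$ chooses for each edge one of its endpoints as its head; vertex $v$ receives the bundle $X_v$ of edges whose head is $v$. The orientation is EFX if for all $u,v\in V$ and every $g\in X_v$, $f_u(X_u)\ge f_u(X_v\setminus\{g\})$. A graph $G$ is strongly EFX-orientable if for every graphical instance on $G$ there exists an EFX orientation. *)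

theory Defs
  imports Complex_Main
begin

(* A graph is a pair (V, E) with E a set of 2-element subsets of V. *)

definition incident :: "'v set set \<Rightarrow> 'v \<Rightarrow> 'v set set" where
  "incident E v = {e \<in> E. v \<in> e}"

definition graphical_instance :: "'v set \<Rightarrow> 'v set set \<Rightarrow> ('v \<Rightarrow> 'v set set \<Rightarrow> real) \<Rightarrow> bool" where
  "graphical_instance V E f \<longleftrightarrow>
     (\<forall>v\<in>V. \<forall>X. X \<subseteq> E \<longrightarrow> 0 \<le> f v X) \<and>
     (\<forall>v\<in>V. \<forall>A B. A \<subseteq> B \<and> B \<subseteq> E \<longrightarrow> f v A \<le> f v B) \<and>
     (\<forall>v\<in>V. \<forall>X. X \<subseteq> E \<longrightarrow> f v X = f v (X \<inter> incident E v))"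

definition is_orientation :: "'v set set \<Rightarrow> ('v set \<Rightarrow> 'v) \<Rightarrow> bool" where
  "is_orientation E h \<longleftrightarrow> (\<forall>e\<in>E. h e \<in> e)"

definition bundle_of :: "'v set set \<Rightarrow> ('v set \<Rightarrow> 'v) \<Rightarrow> 'v \<Rightarrow> 'v set set" where
  "bundle_of E h v = {e \<in> E. h e = v}"

definition EFX_orientation :: "'v set \<Rightarrow> 'v set set \<Rightarrow> ('v \<Rightarrow> 'v set set \<Rightarrow> real) \<Rightarrow> ('v set \<Rightarrow> 'v) \<Rightarrow> bool" where
  "EFX_orientation V E f h \<longleftrightarrow> is_orientation E h \<and>
     (\<forall>u\<in>V. \<forall>v\<in>V. \<forall>g\<in>bundle_of E h v. f u (bundle_of E h u) \<ge> f u (bundle_of E h v - {g}))"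

definition strongly_EFX_orientable :: "'v set \<Rightarrow> 'v set set \<Rightarrow> bool" where
  "strongly_EFX_orientable V E \<longleftrightarrow>
     (\<forall>f. graphical_instance V E f \<longrightarrow> (\<exists>h. EFX_orientation V E f h))"

definition is_cycle :: "'v list \<Rightarrow> bool" where
  "is_cycle xs \<longleftrightarrow> distinct xs \<and> length xs \<ge> 3"

definition cycle_edges :: "'v list \<Rightarrow> 'v set set" where
  "cycle_edges xs = {{xs ! i, xs ! (Suc i mod length xs)} | i. i < length xs}"

definition is_odd_cycle :: "'v list \<Rightarrow> bool" where
  "is_odd_cycle xs \<longleftrightarrow> is_cycle xs \<and> odd (length xs)"

definition is_path :: "'v list \<Rightarrow> bool" where
  "is_path ps \<longleftrightarrow> distinct ps \<and> length ps \<ge> 2"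

definition path_edges :: "'v list \<Rightarrow> 'v set set" where
  "path_edges ps = {{ps ! i, ps ! Suc i} | i. Suc i < length ps}"

definition two_odd_cycles_sharing_edge :: "'v set \<Rightarrow> 'v set set \<Rightarrow> bool" where
  "two_odd_cycles_sharing_edge V E \<longleftrightarrow>
     (\<exists>xs ys a b. is_odd_cycle xs \<and> is_odd_cycle ys \<and>
        set xs \<inter> set ys = {a, b} \<and> a \<noteq> b \<and>
        {a, b} \<in> cycle_edges xs \<and> {a, b} \<in> cycle_edges ys \<and>
        V = set xs \<union> set ys \<and> E = cycle_edges xs \<union> cycle_edges ys)"

definition two_odd_cycles_sharing_vertex :: "'v set \<Rightarrow> 'v set set \<Rightarrow> bool" where
  "two_odd_cycles_sharing_vertex V E \<longleftrightarrow>
     (\<exists>xs ys a. is_odd_cycle xs \<and> is_odd_cycle ys \<and>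
        set xs \<inter> set ys = {a} \<and>
        V = set xs \<union> set ys \<and> E = cycle_edges xs \<union> cycle_edges ys)"

definition two_odd_cycles_joined_by_path :: "'v set \<Rightarrow> 'v set set \<Rightarrow> bool" where
  "two_odd_cycles_joined_by_path V E \<longleftrightarrow>
     (\<exists>xs ys ps. is_odd_cycle xs \<and> is_odd_cycle ys \<and>
        set xs \<inter> set ys = {} \<and> is_path ps \<and>
        hd ps \<in> set xs \<and> last ps \<in> set ys \<and>
        set ps \<inter> set xs = {hd ps} \<and> set ps \<inter> set ys = {last ps} \<and>
        V = set xs \<union> set ys \<union> set ps \<and>
        E = cycle_edges xs \<union> cycle_edges ys \<union> path_edges ps)"

end

theory Submission
  imports Defs
begin


definition cyc :: "(nat \<Rightarrow> 'v) \<Rightarrow> nat \<Rightarrow> 'v set \<Rightarrow> 'v set set \<Rightarrow> bool" where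
  "cyc z n S Ed \<longleftrightarrow> 3 \<le> n \<and> (\<forall>i j. z i = z j \<longleftrightarrow> i mod n = j mod n) \<and>
     S = z ` {..<n} \<and> Ed = (\<lambda>j. {z j, z (Suc j)}) ` {..<n}"

lemma mod_cancel_nat: "(p + i) mod (n::nat) = (p + j) mod n \<Longrightarrow> i mod n = j mod n"
  by (simp add: nat_mod_eq_iff)

lemma mod_solve: "0 < (n::nat) \<Longrightarrow> (p + (j + (n - p mod n)) mod n) mod n = j mod n"
proof -
  assume n: "0 < n"
  have "(p + (j + (n - p mod n)) mod n) mod n = (p + (j + (n - p mod n))) mod n"
    by (simp add: mod_add_right_eq)
  also have "p + (j + (n - p mod n)) = j + n + p div n * n"
    using n mod_less_divisor[of n p] div_mult_mod_eq[of p n] by linarith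
  also have "(j + n + p div n * n) mod n = j mod n" by simp
  finally show ?thesis .
qed

lemma cyc_list: assumes "is_cycle xs"
  shows "cyc (\<lambda>j. xs ! (j mod length xs)) (length xs) (set xs) (cycle_edges xs)"
proof -
  let ?n = "length xs"
  have d: "distinct xs" and n3: "3 \<le> ?n" using assms by (auto simp: is_cycle_def)
  have np: "0 < ?n" using n3 by linarith
  have eq: "\<forall>i j. xs ! (i mod ?n) = xs ! (j mod ?n) \<longleftrightarrow> i mod ?n = j mod ?n"
    using np by (simp add: nth_eq_iff_index_eq[OF d])
  have S: "set xs = (\<lambda>j. xs ! (j mod ?n)) ` {..<?n}"
    using n3 by (auto simp: set_conv_nth image_def)
  have E: "cycle_edges xs = (\<lambda>j. {xs ! (j mod ?n), xs ! (Suc j mod ?n)}) ` {..<?n}"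
    by (auto simp: cycle_edges_def image_def)
  show ?thesis unfolding cyc_def using n3 eq S E by blast
qed

lemma cyc_eq: "cyc z n S Ed \<Longrightarrow> z i = z j \<longleftrightarrow> i mod n = j mod n"
  by (simp add: cyc_def)

lemma cyc_n: "cyc z n S Ed \<Longrightarrow> 3 \<le> n"
  by (simp add: cyc_def)

lemma cyc_per: "cyc z n S Ed \<Longrightarrow> z (i mod n) = z i"
  by (simp add: cyc_def)

lemma cyc_mem: assumes "cyc z n S Ed" shows "z i \<in> S"
proof -
  have n: "0 < n" using cyc_n[OF assms] by linarith
  have "z (i mod n) \<in> z ` {..<n}" using n by simp
  moreover have "S = z ` {..<n}" using assms by (simp add: cyc_def)
  ultimately show ?thesis using cyc_per[OF assms] by simp
qed

lemma cyc_S: "cyc z n S Ed \<Longrightarrow> v \<in> S \<Longrightarrow> \<exists>j<n. z j = v"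
  by (auto simp: cyc_def)

lemma cyc_edge: assumes "cyc z n S Ed" shows "{z i, z (Suc i)} \<in> Ed"
proof -
  have n: "0 < n" using cyc_n[OF assms] by simp
  have "z i = z (i mod n)" using cyc_per[OF assms] by simp
  moreover have "z (Suc i) = z (Suc (i mod n))" using assms
    by (simp add: cyc_eq mod_Suc_eq)
  moreover have "{z (i mod n), z (Suc (i mod n))} \<in> Ed"
    using assms n unfolding cyc_def by auto
  ultimately show ?thesis by simp
qed

lemma cyc_E: "cyc z n S Ed \<Longrightarrow> e \<in> Ed \<Longrightarrow> \<exists>j<n. e = {z j, z (Suc j)}"
  by (auto simp: cyc_def)

lemma cyc_edge_eq: assumes "cyc z n S Ed"
  shows "{z i, z (Suc i)} = {z j, z (Suc j)} \<longleftrightarrow> i mod n = j mod n"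
proof
  assume h: "i mod n = j mod n"
  then have "z i = z j" using assms by (simp add: cyc_eq)
  moreover have "z (Suc i) = z (Suc j)" using assms h by (metis cyc_eq mod_Suc_eq)
  ultimately show "{z i, z (Suc i)} = {z j, z (Suc j)}" by simp
next
  assume h: "{z i, z (Suc i)} = {z j, z (Suc j)}"
  have n3: "3 \<le> n" using cyc_n[OF assms] .
  show "i mod n = j mod n"
  proof (rule ccontr)
    assume ne: "i mod n \<noteq> j mod n"
    then have "z i \<noteq> z j" using assms by (simp add: cyc_eq)
    then have a: "z i = z (Suc j)" and b: "z (Suc i) = z j" using h by (auto simp: doubleton_eq_iff)
    from a have "i mod n = Suc j mod n" using assms by (simp add: cyc_eq)
    moreover from b have "Suc i mod n = j mod n" using assms by (simp add: cyc_eq)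
    ultimately have "Suc (Suc j) mod n = j mod n" by (metis mod_Suc_eq)
    then have "(j + 2) mod n = (j + 0) mod n" by simp
    then have "2 mod n = 0 mod n" using mod_cancel_nat[of j 2 n 0] by (simp add: add.commute)
    then show False using n3 by simp
  qed
qed

lemma cyc_shift: assumes "cyc z n S Ed" shows "cyc (\<lambda>j. z (p + j)) n S Ed"
proof -
  have n3: "3 \<le> n" using cyc_n[OF assms] .
  then have np: "0 < n" by simp
  have eq: "\<forall>i j. z (p + i) = z (p + j) \<longleftrightarrow> i mod n = j mod n"
    using assms by (auto simp: cyc_eq intro: mod_cancel_nat mod_add_cong)
  define k where "k j = (j + (n - p mod n)) mod n" for j
  have k: "z (p + k j) = z j" "k j < n" for j
    using assms np mod_solve[OF np, of p j] by (simp_all add: cyc_eq k_def)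
  have S: "S = (\<lambda>j. z (p + j)) ` {..<n}"
  proof
    show "S \<subseteq> (\<lambda>j. z (p + j)) ` {..<n}"
    proof
      fix v assume "v \<in> S"
      then obtain j where "v = z j" using cyc_S[OF assms] by blast
      then show "v \<in> (\<lambda>j. z (p + j)) ` {..<n}" using k by (metis image_eqI lessThan_iff)
    qed
    show "(\<lambda>j. z (p + j)) ` {..<n} \<subseteq> S" using cyc_mem[OF assms] by auto
  qed
  have E: "Ed = (\<lambda>j. {z (p + j), z (Suc (p + j))}) ` {..<n}"
  proof
    show "Ed \<subseteq> (\<lambda>j. {z (p + j), z (Suc (p + j))}) ` {..<n}"
    proof
      fix e assume "e \<in> Ed"
      then obtain j where e: "e = {z j, z (Suc j)}" using cyc_E[OF assms] by blast
      have "z (Suc (p + k j)) = z (Suc j)" using k(1)[of j] assms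
        by (metis cyc_eq mod_Suc_eq)
      then show "e \<in> (\<lambda>j. {z (p + j), z (Suc (p + j))}) ` {..<n}"
        using e k by (metis (no_types, lifting) image_eqI lessThan_iff)
    qed
    show "(\<lambda>j. {z (p + j), z (Suc (p + j))}) ` {..<n} \<subseteq> Ed" using cyc_edge[OF assms] by auto
  qed
  show ?thesis unfolding cyc_def using n3 eq S E by simp
qed

lemma cyc_rev: assumes "cyc z n S Ed" shows "cyc (\<lambda>j. z (n - j mod n)) n S Ed"
proof -
  have n3: "3 \<le> n" using cyc_n[OF assms] .
  then have np: "0 < n" by simp
  have key: "(n - a) mod n = (n - b) mod n \<longleftrightarrow> a = b" if "a < n" "b < n" for a b
  proof (cases "a = 0")
    case True then show ?thesis using that by (cases "b = 0") auto
  next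
    case False then show ?thesis using that by (cases "b = 0") auto
  qed
  have eq: "\<forall>i j. z (n - i mod n) = z (n - j mod n) \<longleftrightarrow> i mod n = j mod n"
    using assms np key by (simp add: cyc_eq)
  have zn: "z n = z 0" using assms by (simp add: cyc_eq)
  have bck: "z (n - ((n - j) mod n) mod n) = z j" if "j < n" for j
  proof (cases "j = 0")
    case True then show ?thesis using zn by simp
  next
    case False then show ?thesis using that by simp
  qed
  have S: "S = (\<lambda>j. z (n - j mod n)) ` {..<n}"
  proof
    show "S \<subseteq> (\<lambda>j. z (n - j mod n)) ` {..<n}"
    proof
      fix v assume "v \<in> S"
      then obtain j where j: "j < n" "v = z j" using cyc_S[OF assms] by blast
      have "(n - j) mod n < n" using np by simp
      moreover have "v = z (n - ((n - j) mod n) mod n)" using bck j by simp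
      ultimately show "v \<in> (\<lambda>j. z (n - j mod n)) ` {..<n}" by blast
    qed
    show "(\<lambda>j. z (n - j mod n)) ` {..<n} \<subseteq> S" using cyc_mem[OF assms] by auto
  qed
  have E: "Ed = (\<lambda>j. {z (n - j mod n), z (n - Suc j mod n)}) ` {..<n}"
  proof
    show "Ed \<subseteq> (\<lambda>j. {z (n - j mod n), z (n - Suc j mod n)}) ` {..<n}"
    proof
      fix e assume "e \<in> Ed"
      then obtain j where j: "j < n" "e = {z j, z (Suc j)}" using cyc_E[OF assms] by blast
      define k where "k = n - Suc j"
      have kn: "k < n" using j np by (simp add: k_def)
      have "{z (n - k mod n), z (n - Suc k mod n)} = {z (Suc j), z j}"
      proof (cases "j = 0")
        case True
        then have "n - k mod n = Suc 0" "n - Suc k mod n = n" using np n3 by (simp_all add: k_def)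
        then show ?thesis using True zn by simp
      next
        case False
        then have "Suc k < n" "k < n" using j by (auto simp: k_def)
        then show ?thesis using j by (simp add: k_def Suc_diff_Suc)
      qed
      then have "e = {z (n - k mod n), z (n - Suc k mod n)}" using j(2) insert_commute[of "z j" "z (Suc j)" "{}"] by simp
      then show "e \<in> (\<lambda>j. {z (n - j mod n), z (n - Suc j mod n)}) ` {..<n}"
        using kn by blast
    qed
    show "(\<lambda>j. {z (n - j mod n), z (n - Suc j mod n)}) ` {..<n} \<subseteq> Ed"
    proof
      fix e assume "e \<in> (\<lambda>j. {z (n - j mod n), z (n - Suc j mod n)}) ` {..<n}"
      then obtain j where j: "j < n" "e = {z (n - j mod n), z (n - Suc j mod n)}" by auto
      have "z (n - j mod n) = z (Suc (n - Suc j mod n))"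
      proof (cases "Suc j = n")
        case True
        then have "n - j mod n = 1" "n - Suc j mod n = n" using j by auto
        moreover have "Suc n mod n = 1 mod n" using mod_Suc_eq[of n n] by simp
        then have "z (Suc n) = z 1" using assms by (simp add: cyc_eq)
        ultimately show ?thesis by simp
      next
        case False then show ?thesis using j by (simp add: Suc_diff_Suc)
      qed
      then have "e = {z (n - Suc j mod n), z (Suc (n - Suc j mod n))}" using j by auto
      then show "e \<in> Ed" using cyc_edge[OF assms] by simp
    qed
  qed
  show ?thesis unfolding cyc_def using n3 eq S E by simp
qed



definition prefers :: "('v \<Rightarrow> 'v set set \<Rightarrow> real) \<Rightarrow> 'v set set \<Rightarrow> 'v \<Rightarrow> 'v set \<Rightarrow> bool" where
  "prefers f E u b \<longleftrightarrow> (\<forall>X. X \<subseteq> E \<longrightarrow> b \<notin> X \<longrightarrow> f u X < f u {b})"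

definition val :: "'v set set \<Rightarrow> ('v \<Rightarrow> 'v set \<Rightarrow> real) \<Rightarrow> 'v \<Rightarrow> 'v set set \<Rightarrow> real" where
  "val E wt v X = (\<Sum>e \<in> X \<inter> incident E v. wt v e)"

lemma bundle_sub: "bundle_of E h u \<subseteq> E"
  by (auto simp: bundle_of_def)

lemma in_bundle: "e \<in> E \<Longrightarrow> e \<in> bundle_of E h u \<longleftrightarrow> h e = u"
  by (auto simp: bundle_of_def)

lemma orient: "EFX_orientation V E f h \<Longrightarrow> e \<in> E \<Longrightarrow> h e \<in> e"
  by (auto simp: EFX_orientation_def is_orientation_def)

lemma harm:
  assumes efx: "EFX_orientation V E f h" and gi: "graphical_instance V E f"
    and uV: "u \<in> V" and wV: "w \<in> V" and eE: "e \<in> E" and gE: "g \<in> E" and eg: "e \<noteq> g"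
    and he: "h e = w" and hg: "h g = w"
  shows "f u {e} \<le> f u (bundle_of E h u)"
proof -
  have gb: "g \<in> bundle_of E h w" using gE hg unfolding bundle_of_def by blast
  have eb: "e \<in> bundle_of E h w - {g}" using eE he eg unfolding bundle_of_def by blast
  have all: "\<forall>u\<in>V. \<forall>v\<in>V. \<forall>g\<in>bundle_of E h v. f u (bundle_of E h u) \<ge> f u (bundle_of E h v - {g})"
    using efx unfolding EFX_orientation_def by (elim conjE)
  have 1: "f u (bundle_of E h u) \<ge> f u (bundle_of E h w - {g})"
    using all uV wV gb by blast
  have mono: "\<forall>v\<in>V. \<forall>A B. A \<subseteq> B \<and> B \<subseteq> E \<longrightarrow> f v A \<le> f v B"
    using gi unfolding graphical_instance_def by (elim conjE)
  have sub: "{e} \<subseteq> bundle_of E h w - {g}" "bundle_of E h w - {g} \<subseteq> E"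
    using eb unfolding bundle_of_def by blast+
  have 2: "f u {e} \<le> f u (bundle_of E h w - {g})"
    using mono uV sub by blast
  show ?thesis using 1 2 by linarith
qed

lemma noharm:
  assumes efx: "EFX_orientation V E f h" and gi: "graphical_instance V E f"
    and uV: "u \<in> V" and wV: "w \<in> V" and pu: "prefers f E u e" and eE: "e \<in> E" and gE: "g \<in> E"
    and he: "h e = w" and hg: "h g = w" and wu: "w \<noteq> u"
  shows "g = e"
proof (rule ccontr)
  assume "g \<noteq> e"
  then have ne: "e \<noteq> g" by simp
  have 1: "f u {e} \<le> f u (bundle_of E h u)" using harm[OF efx gi uV wV eE gE ne he hg] .
  have nb: "e \<notin> bundle_of E h u" using he wu unfolding bundle_of_def by blast
  have sb: "bundle_of E h u \<subseteq> E" by (rule bundle_sub)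
  have 2: "f u (bundle_of E h u) < f u {e}" using pu[unfolded prefers_def, rule_format, OF sb nb] .
  show False using 1 2 by linarith
qed

lemma step:
  assumes efx: "EFX_orientation V E f h" and gi: "graphical_instance V E f"
    and xV: "x \<in> V" and yV: "y \<in> V" and aE: "a \<in> E" and bE: "b \<in> E" and cE: "c \<in> E"
    and ha: "h a = x" and b: "b = {x, y}" and c: "c = {y, z}" and ab: "a \<noteq> b" and bc: "b \<noteq> c"
    and xy: "x \<noteq> y" and yz: "y \<noteq> z" and px: "prefers f E x b" and py: "prefers f E y b"
  shows "h c = z"
proof -
  have hb1: "h b \<in> b" using orient[OF efx bE] .
  have hb2: "h b \<noteq> x"
  proof
    assume hbx: "h b = x"
    have "a = b" using noharm[OF efx gi yV xV py bE aE hbx ha] xy by blast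
    then show False using ab by blast
  qed
  have hb: "h b = y" using hb1 hb2 b by blast
  have hc1: "h c \<in> c" using orient[OF efx cE] .
  have hc2: "h c \<noteq> y"
  proof
    assume hcy: "h c = y"
    have yx: "y \<noteq> x" using xy by blast
    have "c = b" using noharm[OF efx gi xV yV px bE cE hb hcy yx] .
    then show False using bc by blast
  qed
  show ?thesis using hc1 hc2 c by blast
qed

lemma chain:
  assumes efx: "EFX_orientation V E f h" and gi: "graphical_instance V E f"
    and zV: "\<And>i. i \<le> s + 2*T \<Longrightarrow> z i \<in> V"
    and gE: "\<And>i. i < s + 2*T \<Longrightarrow> {z i, z (Suc i)} \<in> E"
    and d1: "\<And>i. i < s + 2*T \<Longrightarrow> z i \<noteq> z (Suc i)"
    and d2: "\<And>i. i + 2 \<le> s + 2*T \<Longrightarrow> z i \<noteq> z (i + 2)"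
    and pr: "\<And>t. t < T \<Longrightarrow> prefers f E (z (s+2*t)) {z (s+2*t), z (Suc (s+2*t))} \<and>
                              prefers f E (z (Suc (s+2*t))) {z (s+2*t), z (Suc (s+2*t))}"
    and st1: "h a = z s" and st2: "a \<in> E" and st3: "0 < T \<Longrightarrow> a \<noteq> {z s, z (Suc s)}"
  shows "t < T \<Longrightarrow> h {z (Suc (s+2*t)), z (Suc (Suc (s+2*t)))} = z (Suc (Suc (s+2*t)))"
proof (induction t)
  case 0
  have T: "s + 2 \<le> s + 2*T" using 0 by simp
  have v1: "z s \<in> V" "z (Suc s) \<in> V" using zV T by auto
  have e1: "{z s, z (Suc s)} \<in> E" "{z (Suc s), z (Suc (Suc s))} \<in> E" using gE T by auto
  have n1: "z s \<noteq> z (Suc s)" "z (Suc s) \<noteq> z (Suc (Suc s))" using d1 T by auto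
  have q: "s + 2 = Suc (Suc s)" by simp
  have n2: "z s \<noteq> z (Suc (Suc s))" using d2[of s] T unfolding q by simp
  have ne: "{z s, z (Suc s)} \<noteq> {z (Suc s), z (Suc (Suc s))}"
    using n1 n2 by (auto simp: doubleton_eq_iff)
  have a: "a \<noteq> {z s, z (Suc s)}" using st3 0 by simp
  have p: "prefers f E (z s) {z s, z (Suc s)}" "prefers f E (z (Suc s)) {z s, z (Suc s)}"
    using pr[of 0] 0 by simp_all
  show ?case
    using step[OF efx gi v1 st2 e1(1) e1(2) st1 refl refl a ne n1 p] by simp
next
  case (Suc t)
  define i where "i = Suc (Suc (s + 2*t))"
  have lt: "i + 2 \<le> s + 2*T" using Suc by (simp add: i_def)
  have IH: "h {z (i - 1), z i} = z i" using Suc by (simp add: i_def)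
  have v1: "z i \<in> V" "z (Suc i) \<in> V" using zV lt by auto
  have e0: "{z (i - 1), z i} \<in> E" using gE[of "i - 1"] lt by (simp add: i_def)
  have e1: "{z i, z (Suc i)} \<in> E" "{z (Suc i), z (Suc (Suc i))} \<in> E" using gE lt by auto
  have n1: "z i \<noteq> z (Suc i)" "z (Suc i) \<noteq> z (Suc (Suc i))" using d1 lt by auto
  have q: "i + 2 = Suc (Suc i)" "i - 1 + 2 = Suc i" "i - 1 + 2 \<le> s + 2*T" using lt by (simp_all add: i_def)
  have n2: "z i \<noteq> z (Suc (Suc i))" using d2[of i] lt unfolding q(1) by simp
  have n3: "z (i - 1) \<noteq> z (Suc i)" using d2[of "i - 1"] q(3) unfolding q(2) by simp
  have ne1: "{z (i - 1), z i} \<noteq> {z i, z (Suc i)}"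
    using n1 n3 by (auto simp: doubleton_eq_iff)
  have ne2: "{z i, z (Suc i)} \<noteq> {z (Suc i), z (Suc (Suc i))}"
    using n1 n2 by (auto simp: doubleton_eq_iff)
  have si: "s + 2 * Suc t = i" by (simp add: i_def)
  have p: "prefers f E (z i) {z i, z (Suc i)}" "prefers f E (z (Suc i)) {z i, z (Suc i)}"
    using pr[of "Suc t"] Suc.prems si by simp_all
  have "h {z (Suc i), z (Suc (Suc i))} = z (Suc (Suc i))"
    using step[OF efx gi v1 e0 e1(1) e1(2) IH refl refl ne1 ne2 n1 p] by simp
  then show ?case using si by simp
qed

lemma val_inst:
  assumes fin: "finite E" and nn: "\<And>v e. 0 \<le> wt v e"
  shows "graphical_instance V E (val E wt)"
proof -
  have a: "\<forall>v\<in>V. \<forall>X. X \<subseteq> E \<longrightarrow> 0 \<le> val E wt v X"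
    unfolding val_def using nn by (simp add: sum_nonneg)
  have b: "\<forall>v\<in>V. \<forall>A B. A \<subseteq> B \<and> B \<subseteq> E \<longrightarrow> val E wt v A \<le> val E wt v B"
  proof (intro ballI allI impI)
    fix v A B assume h: "A \<subseteq> B \<and> B \<subseteq> E"
    then have "finite (B \<inter> incident E v)" using fin by (meson finite_Int finite_subset)
    then show "val E wt v A \<le> val E wt v B" unfolding val_def
      using h nn by (intro sum_mono2) auto
  qed
  have c: "\<forall>v\<in>V. \<forall>X. X \<subseteq> E \<longrightarrow> val E wt v X = val E wt v (X \<inter> incident E v)"
    unfolding val_def by (simp add: Int_assoc)
  show ?thesis unfolding graphical_instance_def using a b c by blast
qed

lemma val_one:
  assumes "b \<in> E" "u \<in> b"
  shows "val E wt u {b} = wt u b"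
  using assms by (simp add: val_def incident_def)

lemma val_single:
  assumes fin: "finite E" and "b \<in> E" "u \<in> b" and w: "\<And>e. wt u e = (if e = b then 1 else 0)"
  shows "prefers (val E wt) E u b"
  unfolding prefers_def
proof (intro allI impI)
  fix X assume "X \<subseteq> E" "b \<notin> X"
  then have "val E wt u X = 0" unfolding val_def using w by (intro sum.neutral) auto
  moreover have "val E wt u {b} = 1" using val_one[OF assms(2,3)] w by simp
  ultimately show "val E wt u X < val E wt u {b}" by simp
qed

lemma val_pair:
  assumes fin: "finite E" and "k1 \<in> E" "k2 \<in> E" "u \<in> k1" "u \<in> k2" "k1 \<noteq> k2"
    and w: "\<And>e. e \<noteq> k1 \<Longrightarrow> e \<noteq> k2 \<Longrightarrow> wt u e = 0" and X: "X \<subseteq> E"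
  shows "val E wt u X = (if k1 \<in> X then wt u k1 else 0) + (if k2 \<in> X then wt u k2 else 0)"
proof -
  let ?A = "X \<inter> incident E u"
  have finA: "finite ?A" using fin by (simp add: incident_def)
  have "val E wt u X = (\<Sum>e \<in> ?A \<inter> {k1, k2}. wt u e) + (\<Sum>e \<in> ?A - {k1, k2}. wt u e)"
    unfolding val_def using finA by (metis sum.Int_Diff)
  moreover have "(\<Sum>e \<in> ?A - {k1, k2}. wt u e) = 0" using w by (intro sum.neutral) auto
  moreover have "?A \<inter> {k1, k2} = (if k1 \<in> X then {k1} else {}) \<union> (if k2 \<in> X then {k2} else {})"
    using assms by (auto simp: incident_def)
  ultimately show ?thesis using assms by auto
qed



lemma cyc_ne1: assumes "cyc z n S Ed" shows "z i \<noteq> z (Suc i)"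
proof
  assume "z i = z (Suc i)"
  then have "(i + 0) mod n = (i + 1) mod n" using assms by (simp add: cyc_eq)
  then have "0 mod n = 1 mod n" by (rule mod_cancel_nat)
  then show False using cyc_n[OF assms] by simp
qed

lemma cyc_ne2: assumes "cyc z n S Ed" shows "z i \<noteq> z (i + 2)"
proof
  assume "z i = z (i + 2)"
  then have "(i + 0) mod n = (i + 2) mod n" using assms by (simp add: cyc_eq)
  then have "0 mod n = 2 mod n" by (rule mod_cancel_nat)
  then show False using cyc_n[OF assms] by simp
qed

lemma cyc_zn: assumes "cyc z n S Ed" shows "z n = z 0"
  using assms by (simp add: cyc_eq)

lemma cyc_edge_ne: assumes "cyc z n S Ed" "i mod n \<noteq> j mod n"
  shows "{z i, z (Suc i)} \<noteq> {z j, z (Suc j)}"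
  using cyc_edge_eq[OF assms(1)] assms(2) by simp

lemma trap:
  assumes efx: "EFX_orientation V E f h" and gi: "graphical_instance V E f"
    and cy: "cyc z n S Ed" and od: "odd n" and SV: "S \<subseteq> V" and EdE: "Ed \<subseteq> E"
    and cE: "c \<in> E" and hc: "h c = z 0" and cn: "c \<notin> Ed"
    and pr: "\<And>j. 1 \<le> j \<Longrightarrow> j < n \<Longrightarrow>
               prefers f E (z j) (if even j then {z j, z (Suc j)} else {z (j - 1), z j})"
    and ctr: "\<And>X. X \<subseteq> E \<Longrightarrow> {z 0, z (Suc 0)} \<notin> X \<Longrightarrow> {z (n - 1), z n} \<notin> X \<Longrightarrow>
               f (z 0) X < f (z 0) {{z 0, z (Suc 0)}} \<and> f (z 0) X < f (z 0) {{z (n - 1), z n}}"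
  shows False
proof -
  have n3: "3 \<le> n" using cyc_n[OF cy] .
  define g where "g j = {z j, z (Suc j)}" for j
  have zV: "z i \<in> V" for i using cyc_mem[OF cy] SV by blast
  have gE: "g i \<in> E" for i using cyc_edge[OF cy] EdE unfolding g_def by blast
  have gEd: "g i \<in> Ed" for i using cyc_edge[OF cy] unfolding g_def by blast
  have ne1: "z i \<noteq> z (Suc i)" for i using cyc_ne1[OF cy] .
  have zn: "z n = z 0" using cyc_zn[OF cy] .
  have gl: "g (n - 1) = {z (n - 1), z n}" using n3 by (simp add: g_def)
  have g0: "g 0 = {z 0, z (Suc 0)}" by (simp add: g_def)
  have p1: "prefers f E (z (Suc 0)) (g 0)" using pr[of 1] n3 by (simp add: g_def)
  have ha: "h (g 0) = z (Suc 0)"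
  proof -
    have "h (g 0) \<in> g 0" using orient[OF efx gE] .
    moreover have "h (g 0) \<noteq> z 0"
    proof
      assume h0: "h (g 0) = z 0"
      have "z 0 \<noteq> z (Suc 0)" using ne1 .
      then have "c = g 0" using noharm[OF efx gi zV zV p1 gE cE h0 hc] by blast
      then show False using cn gEd by blast
    qed
    ultimately show ?thesis unfolding g_def by blast
  qed
  have pl: "prefers f E (z (n - 1)) (g (n - 1))"
  proof -
    have "even (n - 1)" using od n3 by simp
    then show ?thesis using pr[of "n - 1"] n3 by (simp add: g_def)
  qed
  have hb: "h (g (n - 1)) = z (n - 1)"
  proof -
    have "h (g (n - 1)) \<in> g (n - 1)" using orient[OF efx gE] .
    moreover have "h (g (n - 1)) \<noteq> z 0"
    proof
      assume h0: "h (g (n - 1)) = z 0"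
      have "z 0 \<noteq> z (n - 1)" using ne1[of "n - 1"] zn n3 by simp
      then have "c = g (n - 1)" using noharm[OF efx gi zV zV pl gE cE h0 hc] by blast
      then show False using cn gEd by blast
    qed
    ultimately show ?thesis using gl zn by auto
  qed
  have nb0: "g 0 \<notin> bundle_of E h (z 0)" using ha ne1[of 0] unfolding bundle_of_def by auto
  have nbl: "g (n - 1) \<notin> bundle_of E h (z 0)"
  proof -
    have "z (n - 1) \<noteq> z 0" using ne1[of "n - 1"] zn n3 by simp
    then show ?thesis using hb unfolding bundle_of_def by auto
  qed
  have cc: "f (z 0) (bundle_of E h (z 0)) < f (z 0) {g 0} \<and>
            f (z 0) (bundle_of E h (z 0)) < f (z 0) {g (n - 1)}"
    using ctr[OF bundle_sub] nb0 nbl gl g0 by simp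
  have g01: "g 0 \<noteq> g 1" unfolding g_def using cyc_edge_ne[OF cy, of 0 1] n3 by simp
  have h1: "h (g 1) = z 2"
  proof -
    have "h (g 1) \<in> g 1" using orient[OF efx gE] .
    moreover have "h (g 1) \<noteq> z 1"
    proof
      assume h1: "h (g 1) = z 1"
      have "f (z 0) {g 0} \<le> f (z 0) (bundle_of E h (z 0))"
        using harm[OF efx gi zV zV gE gE g01 _ h1] ha by simp
      then show False using cc by linarith
    qed
    ultimately show ?thesis unfolding g_def by (auto simp: numeral_2_eq_2)
  qed
  have hm: "h (g (n - 2)) = z (n - 1)"
  proof (cases "n = 3")
    case True then show ?thesis using h1 by simp
  next
    case False
    then have n5: "5 \<le> n" using n3 od by presburger
    define T where "T = (n - 3) div 2"
    have T2: "2 * T = n - 3" using od n3 unfolding T_def by presburger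
    have T0: "0 < T" using n5 T2 by linarith
    have ch: "t < T \<Longrightarrow> h {z (Suc (2+2*t)), z (Suc (Suc (2+2*t)))} = z (Suc (Suc (2+2*t)))" for t
    proof (rule chain[OF efx gi, where s = 2 and T = T and a = "g 1"])
      show "\<And>i. i \<le> 2 + 2 * T \<Longrightarrow> z i \<in> V" using zV by blast
      show "\<And>i. i < 2 + 2 * T \<Longrightarrow> {z i, z (Suc i)} \<in> E" using gE unfolding g_def by blast
      show "\<And>i. i < 2 + 2 * T \<Longrightarrow> z i \<noteq> z (Suc i)" using ne1 by blast
      show "\<And>i. i + 2 \<le> 2 + 2 * T \<Longrightarrow> z i \<noteq> z (i + 2)" using cyc_ne2[OF cy] by blast
      show "\<And>t. t < T \<Longrightarrow> prefers f E (z (2+2*t)) {z (2+2*t), z (Suc (2+2*t))} \<and>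
                              prefers f E (z (Suc (2+2*t))) {z (2+2*t), z (Suc (2+2*t))}"
      proof -
        fix t assume t: "t < T"
        have a: "prefers f E (z (2+2*t)) {z (2+2*t), z (Suc (2+2*t))}"
          using pr[of "2+2*t"] t T2 by simp
        have b: "prefers f E (z (Suc (2+2*t))) {z (2+2*t), z (Suc (2+2*t))}"
          using pr[of "Suc (2+2*t)"] t T2 by simp
        show "?thesis t" using a b by blast
      qed
      show "h (g 1) = z 2" using h1 .
      show "g 1 \<in> E" using gE .
      show "0 < T \<Longrightarrow> g 1 \<noteq> {z 2, z (Suc 2)}"
        using cyc_edge_ne[OF cy, of 1 2] n3 unfolding g_def by (simp add: numeral_2_eq_2)
    qed
    have "h {z (Suc (2+2*(T-1))), z (Suc (Suc (2+2*(T-1))))} = z (Suc (Suc (2+2*(T-1))))"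
      using ch T0 by simp
    moreover have "Suc (2+2*(T-1)) = n - 2" "Suc (Suc (2+2*(T-1))) = n - 1" using T2 T0 n5 by linarith+
    moreover have "Suc (n - 2) = n - 1" using n5 by simp
    ultimately show ?thesis unfolding g_def by simp
  qed
  have gne: "g (n - 1) \<noteq> g (n - 2)"
    unfolding g_def using cyc_edge_ne[OF cy, of "n - 1" "n - 2"] n3 by simp
  have "f (z 0) {g (n - 1)} \<le> f (z 0) (bundle_of E h (z 0))"
    using harm[OF efx gi zV zV gE gE gne hb hm] .
  then show False using cc by linarith
qed

lemma Fgad:
  assumes efx: "EFX_orientation V E f h" and gi: "graphical_instance V E f"
    and cy: "cyc z n S Ed" and od: "odd n" and SV: "S \<subseteq> V" and EdE: "Ed \<subseteq> E"
    and pr: "\<And>j. 1 \<le> j \<Longrightarrow> j < n \<Longrightarrow>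
               prefers f E (z j) (if odd j then {z j, z (Suc j)} else {z (j - 1), z j})"
  shows "h {z 0, z (Suc 0)} = z 0 \<or> h {z (n - 1), z n} = z 0"
proof -
  have n3: "3 \<le> n" using cyc_n[OF cy] .
  define g where "g j = {z j, z (Suc j)}" for j
  have zV: "z i \<in> V" for i using cyc_mem[OF cy] SV by blast
  have gE: "g i \<in> E" for i using cyc_edge[OF cy] EdE unfolding g_def by blast
  have ne1: "z i \<noteq> z (Suc i)" for i using cyc_ne1[OF cy] .
  have zn: "z n = z 0" using cyc_zn[OF cy] .
  have "h (g 0) \<in> g 0" using orient[OF efx gE] .
  then have "h (g 0) = z 0 \<or> h (g 0) = z 1" unfolding g_def by auto
  then show ?thesis
  proof
    assume "h (g 0) = z 0" then show ?thesis unfolding g_def by simp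
  next
    assume h1: "h (g 0) = z 1"
    define T where "T = (n - 1) div 2"
    have T2: "2 * T = n - 1" using od n3 unfolding T_def by presburger
    have T0: "0 < T" using n3 T2 by linarith
    have ch: "t < T \<Longrightarrow> h {z (Suc (1+2*t)), z (Suc (Suc (1+2*t)))} = z (Suc (Suc (1+2*t)))" for t
    proof (rule chain[OF efx gi, where s = 1 and T = T and a = "g 0"])
      show "\<And>i. i \<le> 1 + 2 * T \<Longrightarrow> z i \<in> V" using zV by blast
      show "\<And>i. i < 1 + 2 * T \<Longrightarrow> {z i, z (Suc i)} \<in> E" using gE unfolding g_def by blast
      show "\<And>i. i < 1 + 2 * T \<Longrightarrow> z i \<noteq> z (Suc i)" using ne1 by blast
      show "\<And>i. i + 2 \<le> 1 + 2 * T \<Longrightarrow> z i \<noteq> z (i + 2)" using cyc_ne2[OF cy] by blast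
      show "\<And>t. t < T \<Longrightarrow> prefers f E (z (1+2*t)) {z (1+2*t), z (Suc (1+2*t))} \<and>
                              prefers f E (z (Suc (1+2*t))) {z (1+2*t), z (Suc (1+2*t))}"
      proof -
        fix t assume t: "t < T"
        have a: "prefers f E (z (1+2*t)) {z (1+2*t), z (Suc (1+2*t))}"
          using pr[of "1+2*t"] t T2 by simp
        have b: "prefers f E (z (Suc (1+2*t))) {z (1+2*t), z (Suc (1+2*t))}"
          using pr[of "Suc (1+2*t)"] t T2 by simp
        show "?thesis t" using a b by blast
      qed
      show "h (g 0) = z 1" using h1 .
      show "g 0 \<in> E" using gE .
      show "0 < T \<Longrightarrow> g 0 \<noteq> {z 1, z (Suc 1)}"
        using cyc_edge_ne[OF cy, of 0 1] n3 unfolding g_def by simp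
    qed
    have "h {z (Suc (1+2*(T-1))), z (Suc (Suc (1+2*(T-1))))} = z (Suc (Suc (1+2*(T-1))))"
      using ch T0 by simp
    moreover have "Suc (1+2*(T-1)) = n - 1" "Suc (Suc (1+2*(T-1))) = n" using T2 T0 n3 by linarith+
    ultimately show ?thesis using zn by simp
  qed
qed



definition pos :: "(nat \<Rightarrow> 'v) \<Rightarrow> nat \<Rightarrow> 'v \<Rightarrow> nat" where
  "pos z n v = (THE j. j < n \<and> z j = v)"

definition pw :: "bool \<Rightarrow> (nat \<Rightarrow> 'v) \<Rightarrow> nat \<Rightarrow> 'v set" where
  "pw b z j = (if even j = b then {z j, z (Suc j)} else {z (j - 1), z j})"

lemma pos_cyc: assumes "cyc z n S Ed" "j < n" shows "pos z n (z j) = j"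
  unfolding pos_def
proof (rule the_equality)
  show "j < n \<and> z j = z j" using assms(2) by simp
  fix i assume "i < n \<and> z i = z j"
  then show "i = j" using assms cyc_eq[OF assms(1), of i j] by auto
qed

lemma cyc_center: assumes "cyc z n S Ed" "c \<in> S"
  shows "\<exists>z'. cyc z' n S Ed \<and> z' 0 = c"
proof -
  obtain j where "z j = c" using cyc_S[OF assms] by blast
  then show ?thesis using cyc_shift[OF assms(1), of j] by (intro exI[of _ "\<lambda>t. z (j + t)"]) simp
qed

lemma cyc_orient: assumes cy: "cyc z n S Ed" and ab: "{a, b} \<in> Ed"
  shows "\<exists>z'. cyc z' n S Ed \<and> z' 0 = a \<and> z' (n - 1) = b"
proof -
  have n3: "3 \<le> n" using cyc_n[OF cy] .
  obtain j where j: "j < n" "{a, b} = {z j, z (Suc j)}" using cyc_E[OF cy ab] by blast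
  then have "(a = z j \<and> b = z (Suc j)) \<or> (a = z (Suc j) \<and> b = z j)" by (auto simp: doubleton_eq_iff)
  then show ?thesis
  proof
    assume h: "a = z j \<and> b = z (Suc j)"
    define z1 where "z1 t = z (j + t)" for t
    have c1: "cyc z1 n S Ed" unfolding z1_def using cyc_shift[OF cy] .
    have c2: "cyc (\<lambda>t. z1 (n - t mod n)) n S Ed" using cyc_rev[OF c1] .
    have "z1 (n - 0 mod n) = a" using h cyc_zn[OF c1] by (simp add: z1_def)
    moreover have "z1 (n - (n - 1) mod n) = b" using h n3 by (simp add: z1_def)
    ultimately show ?thesis using c2 by (intro exI[of _ "\<lambda>t. z1 (n - t mod n)"]) simp
  next
    assume h: "a = z (Suc j) \<and> b = z j"
    define z1 where "z1 t = z (Suc j + t)" for t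
    have c1: "cyc z1 n S Ed" unfolding z1_def using cyc_shift[OF cy] .
    have "z1 (n - 1) = z (j + n)" using n3 by (simp add: z1_def)
    also have "\<dots> = z j" using cy by (simp add: cyc_eq)
    finally show ?thesis using c1 h by (intro exI[of _ z1]) (simp add: z1_def)
  qed
qed

lemma cyc_edge_sub: assumes "cyc z n S Ed" "e \<in> Ed" shows "e \<subseteq> S"
  using cyc_E[OF assms] cyc_mem[OF assms(1)] by blast

lemma cyc_fin: assumes "cyc z n S Ed" shows "finite Ed"
  using assms unfolding cyc_def by simp

lemma path_fin: "finite (path_edges ps)"
proof -
  have "path_edges ps = (\<lambda>i. {ps ! i, ps ! Suc i}) ` {i. Suc i < length ps}"
    unfolding path_edges_def by blast
  moreover have "finite {i. Suc i < length ps}" by (rule finite_subset[of _ "{..<length ps}"]) auto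
  ultimately show ?thesis by simp
qed

lemma pw_edge: assumes "cyc z n S Ed" "1 \<le> j" shows "pw b z j \<in> Ed" "z j \<in> pw b z j"
proof -
  have "{z (j - 1), z (Suc (j - 1))} \<in> Ed" using cyc_edge[OF assms(1)] .
  then have "{z (j - 1), z j} \<in> Ed" using assms(2) by simp
  then show "pw b z j \<in> Ed" unfolding pw_def using cyc_edge[OF assms(1)] by auto
  show "z j \<in> pw b z j" unfolding pw_def by auto
qed

lemma cyc_last: assumes "cyc z n S Ed" shows "{z (n - 1), z n} \<in> Ed"
proof -
  have "Suc (n - 1) = n" using cyc_n[OF assms] by simp
  then show ?thesis using cyc_edge[OF assms, of "n - 1"] by simp
qed

lemma case_vertex:
  assumes "two_odd_cycles_sharing_vertex V E"
  shows "\<not> strongly_EFX_orientable V E"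
proof
  assume strong: "strongly_EFX_orientable V E"
  obtain xs ys a where ox: "is_odd_cycle xs" and oy: "is_odd_cycle ys" and int: "set xs \<inter> set ys = {a}"
    and V: "V = set xs \<union> set ys" and E: "E = cycle_edges xs \<union> cycle_edges ys"
    using assms unfolding two_odd_cycles_sharing_vertex_def by blast
  define n where "n = length xs"
  define m where "m = length ys"
  have odn: "odd n" and odm: "odd m" using ox oy by (auto simp: is_odd_cycle_def n_def m_def)
  have cx0: "cyc (\<lambda>j. xs ! (j mod n)) n (set xs) (cycle_edges xs)"
    using cyc_list ox unfolding is_odd_cycle_def n_def by blast
  have cy0: "cyc (\<lambda>j. ys ! (j mod m)) m (set ys) (cycle_edges ys)"
    using cyc_list oy unfolding is_odd_cycle_def m_def by blast
  obtain z where cz: "cyc z n (set xs) (cycle_edges xs)" and z0: "z 0 = a"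
    using cyc_center[OF cx0] int by blast
  obtain w where cw: "cyc w m (set ys) (cycle_edges ys)" and w0: "w 0 = a"
    using cyc_center[OF cy0] int by blast
  have n3: "3 \<le> n" using cyc_n[OF cz] .
  have m3: "3 \<le> m" using cyc_n[OF cw] .
  have finE: "finite E" using cyc_fin[OF cz] cyc_fin[OF cw] E by simp
  have SVx: "set xs \<subseteq> V" and SVy: "set ys \<subseteq> V" using V by auto
  have EdEx: "cycle_edges xs \<subseteq> E" and EdEy: "cycle_edges ys \<subseteq> E" using E by auto
  define k1 where "k1 = {z 0, z (Suc 0)}"
  define k2 where "k2 = {z (n - 1), z n}"
  define wt where "wt v e = (if v = a then (if e = k1 \<or> e = k2 then 1 else 0)
      else if v \<in> set xs then (if e = pw True z (pos z n v) then 1 else 0)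
      else (if e = pw False w (pos w m v) then (1::real) else 0))" for v e
  define f where "f = val E wt"
  have gi: "graphical_instance V E f" unfolding f_def by (rule val_inst[OF finE]) (simp add: wt_def)
  obtain h where efx: "EFX_orientation V E f h"
    using strong gi unfolding strongly_EFX_orientable_def by blast
  have prw: "prefers f E (w j) (if odd j then {w j, w (Suc j)} else {w (j - 1), w j})"
    if j: "1 \<le> j" "j < m" for j
  proof -
    have wa: "w j \<noteq> a" using j w0 cyc_eq[OF cw, of j 0] by simp
    have wx: "w j \<notin> set xs" using wa int cyc_mem[OF cw, of j] by blast
    have pj: "pos w m (w j) = j" using pos_cyc[OF cw j(2)] .
    have be: "pw False w j \<in> E" using EdEy pw_edge[OF cw j(1)] by blast
    have bi: "w j \<in> pw False w j" using pw_edge[OF cw j(1)] by blast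
    have wt: "wt (w j) e = (if e = pw False w j then 1 else 0)" for e
      using wa wx pj by (simp add: wt_def)
    have "prefers f E (w j) (pw False w j)" unfolding f_def by (rule val_single[where wt=wt, OF finE be bi wt])
    then show ?thesis by (simp add: pw_def)
  qed
  have F: "h {w 0, w (Suc 0)} = w 0 \<or> h {w (m - 1), w m} = w 0"
    by (rule Fgad[OF efx gi cw odm SVy EdEy prw])
  then obtain c where cE: "c \<in> E" and hc: "h c = z 0" and cn: "c \<notin> cycle_edges xs"
  proof
    assume h1: "h {w 0, w (Suc 0)} = w 0"
    have "w (Suc 0) \<notin> set xs" using int cyc_mem[OF cw] cyc_eq[OF cw, of "Suc 0" 0] w0 m3 by auto
    then have "{w 0, w (Suc 0)} \<notin> cycle_edges xs" using cyc_edge_sub[OF cz] by blast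
    moreover have "{w 0, w (Suc 0)} \<in> E" using cyc_edge[OF cw] EdEy by blast
    ultimately show thesis using that h1 w0 z0 by simp
  next
    assume h1: "h {w (m - 1), w m} = w 0"
    have "w (m - 1) \<notin> set xs" using int cyc_mem[OF cw] cyc_eq[OF cw, of "m - 1" 0] w0 m3 by auto
    then have "{w (m - 1), w m} \<notin> cycle_edges xs" using cyc_edge_sub[OF cz] by blast
    moreover have "{w (m - 1), w m} \<in> E" using cyc_last[OF cw] EdEy by blast
    ultimately show thesis using that h1 w0 z0 by simp
  qed
  have prz: "prefers f E (z j) (if even j then {z j, z (Suc j)} else {z (j - 1), z j})"
    if j: "1 \<le> j" "j < n" for j
  proof -
    have za: "z j \<noteq> a" using j z0 cyc_eq[OF cz, of j 0] by simp
    have zx: "z j \<in> set xs" using cyc_mem[OF cz] .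
    have pj: "pos z n (z j) = j" using pos_cyc[OF cz j(2)] .
    have be: "pw True z j \<in> E" using EdEx pw_edge[OF cz j(1)] by blast
    have bi: "z j \<in> pw True z j" using pw_edge[OF cz j(1)] by blast
    have wt: "wt (z j) e = (if e = pw True z j then 1 else 0)" for e
      using za zx pj by (simp add: wt_def)
    have "prefers f E (z j) (pw True z j)" unfolding f_def by (rule val_single[where wt=wt, OF finE be bi wt])
    then show ?thesis by (simp add: pw_def)
  qed
  have k1E: "k1 \<in> E" unfolding k1_def using cyc_edge[OF cz] EdEx by blast
  have k2E: "k2 \<in> E" unfolding k2_def using cyc_last[OF cz] EdEx by blast
  have k12: "k1 \<noteq> k2" unfolding k1_def k2_def
    using cyc_edge_ne[OF cz, of 0 "n - 1"] n3 by simp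
  have ak1: "z 0 \<in> k1" and ak2: "z 0 \<in> k2" using cyc_zn[OF cz] by (auto simp: k1_def k2_def)
  have wta: "\<And>e. e \<noteq> k1 \<Longrightarrow> e \<noteq> k2 \<Longrightarrow> wt (z 0) e = 0" using z0 by (simp add: wt_def)
  have fa: "f (z 0) X = (if k1 \<in> X then 1 else 0) + (if k2 \<in> X then 1 else 0)" if "X \<subseteq> E" for X
    unfolding f_def using val_pair[where wt=wt, OF finE k1E k2E ak1 ak2 k12 wta that] z0 by (simp add: wt_def)
  have ctr: "f (z 0) X < f (z 0) {{z 0, z (Suc 0)}} \<and> f (z 0) X < f (z 0) {{z (n - 1), z n}}"
    if "X \<subseteq> E" "{z 0, z (Suc 0)} \<notin> X" "{z (n - 1), z n} \<notin> X" for X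
  proof -
    have "f (z 0) X = 0" using fa[OF that(1)] that(2,3) by (simp add: k1_def k2_def)
    moreover have "f (z 0) {k1} = 1" using fa[of "{k1}"] k1E k12 by simp
    moreover have "f (z 0) {k2} = 1" using fa[of "{k2}"] k2E k12 by simp
    ultimately show ?thesis by (simp add: k1_def k2_def)
  qed
  show False by (rule trap[OF efx gi cz odn SVx EdEx cE hc cn prz ctr])
qed



lemma pos_inj: assumes "\<And>i j. i < n \<Longrightarrow> j < n \<Longrightarrow> z i = z j \<Longrightarrow> i = j" "j < n"
  shows "pos z n (z j) = j"
  unfolding pos_def
proof (rule the_equality)
  show "j < n \<and> z j = z j" using assms(2) by simp
  fix i assume "i < n \<and> z i = z j"
  then show "i = j" using assms by blast
qed

lemma trap_ctr:
  assumes fin: "finite E" and cz: "cyc z n S Ed" and EdE: "Ed \<subseteq> E"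
    and wta: "\<And>e. wt (z 0) e = (if e = {z 0, z (Suc 0)} \<or> e = {z (n - 1), z n} then 1 else 0)"
    and X: "X \<subseteq> E" "{z 0, z (Suc 0)} \<notin> X" "{z (n - 1), z n} \<notin> X"
  shows "val E wt (z 0) X < val E wt (z 0) {{z 0, z (Suc 0)}} \<and>
         val E wt (z 0) X < val E wt (z 0) {{z (n - 1), z n}}"
proof -
  define k1 where "k1 = {z 0, z (Suc 0)}"
  define k2 where "k2 = {z (n - 1), z n}"
  have n3: "3 \<le> n" using cyc_n[OF cz] .
  have k1E: "k1 \<in> E" unfolding k1_def using cyc_edge[OF cz] EdE by blast
  have k2E: "k2 \<in> E" unfolding k2_def using cyc_last[OF cz] EdE by blast
  have k12: "k1 \<noteq> k2" unfolding k1_def k2_def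
    using cyc_edge_ne[OF cz, of 0 "n - 1"] n3 by simp
  have ak1: "z 0 \<in> k1" and ak2: "z 0 \<in> k2" using cyc_zn[OF cz] by (auto simp: k1_def k2_def)
  have wt0: "\<And>e. e \<noteq> k1 \<Longrightarrow> e \<noteq> k2 \<Longrightarrow> wt (z 0) e = 0" using wta by (simp add: k1_def k2_def)
  have fa: "val E wt (z 0) Y = (if k1 \<in> Y then 1 else 0) + (if k2 \<in> Y then 1 else 0)" if "Y \<subseteq> E" for Y
    using val_pair[where wt=wt, OF fin k1E k2E ak1 ak2 k12 wt0 that] wta by (simp add: k1_def k2_def)
  have "val E wt (z 0) X = 0" using fa[OF X(1)] X(2,3) by (simp add: k1_def k2_def)
  moreover have "val E wt (z 0) {k1} = 1" using fa[of "{k1}"] k1E k12 by simp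
  moreover have "val E wt (z 0) {k2} = 1" using fa[of "{k2}"] k2E k12 by simp
  ultimately show ?thesis by (simp add: k1_def k2_def)
qed

lemma case_path:
  assumes "two_odd_cycles_joined_by_path V E"
  shows "\<not> strongly_EFX_orientable V E"
proof
  assume strong: "strongly_EFX_orientable V E"
  obtain xs ys ps where ox: "is_odd_cycle xs" and oy: "is_odd_cycle ys" and dj: "set xs \<inter> set ys = {}"
    and pp: "is_path ps" and hx: "hd ps \<in> set xs" and ly: "last ps \<in> set ys"
    and ix: "set ps \<inter> set xs = {hd ps}" and iy: "set ps \<inter> set ys = {last ps}"
    and V: "V = set xs \<union> set ys \<union> set ps"
    and E: "E = cycle_edges xs \<union> cycle_edges ys \<union> path_edges ps"
    using assms unfolding two_odd_cycles_joined_by_path_def by blast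
  define n where "n = length xs"
  define m where "m = length ys"
  define l where "l = length ps - 1"
  define p where "p i = ps ! i" for i
  define x where "x = hd ps"
  define y where "y = last ps"
  have odn: "odd n" and odm: "odd m" using ox oy by (auto simp: is_odd_cycle_def n_def m_def)
  have cx0: "cyc (\<lambda>j. xs ! (j mod n)) n (set xs) (cycle_edges xs)"
    using cyc_list ox unfolding is_odd_cycle_def n_def by blast
  have cy0: "cyc (\<lambda>j. ys ! (j mod m)) m (set ys) (cycle_edges ys)"
    using cyc_list oy unfolding is_odd_cycle_def m_def by blast
  obtain z where cz: "cyc z n (set xs) (cycle_edges xs)" and z0: "z 0 = x"
    using cyc_center[OF cx0] hx x_def by blast
  obtain w where cw: "cyc w m (set ys) (cycle_edges ys)" and w0: "w 0 = y"
    using cyc_center[OF cy0] ly y_def by blast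
  have n3: "3 \<le> n" using cyc_n[OF cz] .
  have m3: "3 \<le> m" using cyc_n[OF cw] .
  have dps: "distinct ps" and lps: "2 \<le> length ps" using pp by (auto simp: is_path_def)
  have l1: "1 \<le> l" and lsuc: "length ps = Suc l" using lps by (auto simp: l_def)
  have pinj: "\<And>i j. i < Suc l \<Longrightarrow> j < Suc l \<Longrightarrow> p i = p j \<Longrightarrow> i = j"
    using dps lsuc by (simp add: p_def nth_eq_iff_index_eq)
  have pne: "i \<le> l \<Longrightarrow> j \<le> l \<Longrightarrow> i \<noteq> j \<Longrightarrow> p i \<noteq> p j" for i j
  proof
    assume a: "i \<le> l" "j \<le> l" "i \<noteq> j" "p i = p j"
    have "i = j" by (rule pinj) (use a in auto)
    then show False using a(3) by blast
  qed
  have pmem: "i \<le> l \<Longrightarrow> p i \<in> set ps" for i using lsuc by (simp add: p_def)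
  have p0: "p 0 = x" using lps by (cases ps) (auto simp: p_def x_def)
  have psne: "ps \<noteq> []" using lps by auto
  have pl: "p l = y" using last_conv_nth[OF psne] by (simp add: p_def y_def l_def)
  have pE0: "i < l \<Longrightarrow> {p i, p (Suc i)} \<in> path_edges ps" for i
    unfolding path_edges_def p_def using lsuc by auto
  have finE: "finite E" using cyc_fin[OF cz] cyc_fin[OF cw] path_fin E by simp
  have SVx: "set xs \<subseteq> V" and SVy: "set ys \<subseteq> V" using V by auto
  have EdEx: "cycle_edges xs \<subseteq> E" and EdEy: "cycle_edges ys \<subseteq> E" using E by auto
  have pE: "i < l \<Longrightarrow> {p i, p (Suc i)} \<in> E" for i using pE0 E by blast
  have pV: "i \<le> l \<Longrightarrow> p i \<in> V" for i using pmem V by blast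
  have pnx: "1 \<le> i \<Longrightarrow> i \<le> l \<Longrightarrow> p i \<notin> set xs" for i
  proof
    assume i: "1 \<le> i" "i \<le> l" and "p i \<in> set xs"
    then have "p i \<in> set ps \<inter> set xs" using pmem[OF i(2)] by blast
    then have "p i = hd ps" using ix by blast
    then have "p i = p 0" using p0 x_def by simp
    then show False using pne[of i 0] i by simp
  qed
  have pny: "i < l \<Longrightarrow> p i \<notin> set ys" for i
  proof
    assume i: "i < l" and "p i \<in> set ys"
    then have "p i \<in> set ps \<inter> set ys" using pmem[of i] i by simp
    then have "p i = last ps" using iy by blast
    then have "p i = p l" using pl y_def by simp
    then show False using pne[of i l] i by simp
  qed
  have xny: "x \<notin> set ys" using dj hx x_def by blast
  have ynx: "y \<notin> set xs" using dj ly y_def by blast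
  have pd1: "i < l \<Longrightarrow> p i \<noteq> p (Suc i)" for i
  proof
    assume "i < l" "p i = p (Suc i)"
    then show False using pne[of i "Suc i"] by simp
  qed
  have pd2: "i + 2 \<le> l \<Longrightarrow> p i \<noteq> p (i + 2)" for i
  proof
    assume "i + 2 \<le> l" "p i = p (i + 2)"
    then show False using pne[of i "i + 2"] by simp
  qed
  have ppos: "i \<le> l \<Longrightarrow> pos p (Suc l) (p i) = i" for i
    unfolding pos_def
  proof (rule the_equality)
    assume "i \<le> l"
    then show "i < Suc l \<and> p i = p i" by simp
  next
    fix k assume "i \<le> l" "k < Suc l \<and> p k = p i"
    then show "k = i" using pne[of k i] by auto
  qed
  have zx: "z j \<in> set xs" for j using cyc_mem[OF cz] .
  have wy: "w j \<in> set ys" for j using cyc_mem[OF cw] .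
  define k1 where "k1 = {z 0, z (Suc 0)}"
  define k2 where "k2 = {z (n - 1), z n}"
  define q1 where "q1 = {w 0, w (Suc 0)}"
  define q2 where "q2 = {w (m - 1), w m}"
  define sel where "sel v e = (if v = x then (if odd l then (e = k1 \<or> e = k2) else e = {p 0, p (Suc 0)})
      else if v = y then (e = q1 \<or> e = q2)
      else if v \<in> set xs then e = pw (odd l) z (pos z n v)
      else if v \<in> set ys then e = pw True w (pos w m v)
      else e = pw (even l) p (pos p (Suc l) v))" for v e
  define wt where "wt v e = (if sel v e then (1::real) else 0)" for v e
  define f where "f = val E wt"
  have gi: "graphical_instance V E f" unfolding f_def by (rule val_inst[OF finE]) (simp add: wt_def)
  obtain h where efx: "EFX_orientation V E f h"
    using strong gi unfolding strongly_EFX_orientable_def by blast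
  have xy: "x \<noteq> y" using xny w0 wy by metis
  have prz: "prefers f E (z j) (pw (odd l) z j)" if j: "1 \<le> j" "j < n" for j
  proof -
    have za: "z j \<noteq> x" using j z0 cyc_eq[OF cz, of j 0] by simp
    have zy: "z j \<noteq> y" using ynx zx by blast
    have pj: "pos z n (z j) = j" using pos_cyc[OF cz j(2)] .
    have be: "pw (odd l) z j \<in> E" using EdEx pw_edge[OF cz j(1)] by blast
    have bi: "z j \<in> pw (odd l) z j" using pw_edge[OF cz j(1)] by blast
    have wt: "wt (z j) e = (if e = pw (odd l) z j then 1 else 0)" for e
      using za zy zx pj by (simp add: wt_def sel_def)
    show ?thesis unfolding f_def by (rule val_single[where wt=wt, OF finE be bi wt])
  qed
  have prw: "prefers f E (w j) (pw True w j)" if j: "1 \<le> j" "j < m" for j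
  proof -
    have wa: "w j \<noteq> y" using j w0 cyc_eq[OF cw, of j 0] by simp
    have wx: "w j \<noteq> x" using xny wy by blast
    have wnx: "w j \<notin> set xs" using dj wy by blast
    have pj: "pos w m (w j) = j" using pos_cyc[OF cw j(2)] .
    have be: "pw True w j \<in> E" using EdEy pw_edge[OF cw j(1)] by blast
    have bi: "w j \<in> pw True w j" using pw_edge[OF cw j(1)] by blast
    have wt: "wt (w j) e = (if e = pw True w j then 1 else 0)" for e
      using wa wx wnx wy pj by (simp add: wt_def sel_def)
    show ?thesis unfolding f_def by (rule val_single[where wt=wt, OF finE be bi wt])
  qed
  have prp: "prefers f E (p i) (pw (even l) p i)" if i: "1 \<le> i" "i < l" for i
  proof -
    have px: "p i \<noteq> x" using pne[of i 0] i p0 by auto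
    have py: "p i \<noteq> y" using pne[of i l] i pl by auto
    have pnx': "p i \<notin> set xs" using pnx i by simp
    have pny': "p i \<notin> set ys" using pny i by simp
    have pj: "pos p (Suc l) (p i) = i" using ppos i by simp
    have e1: "{p (i - 1), p i} \<in> E" using pE[of "i - 1"] i by simp
    have be: "pw (even l) p i \<in> E" unfolding pw_def using e1 pE i by auto
    have bi: "p i \<in> pw (even l) p i" unfolding pw_def by auto
    have wt: "wt (p i) e = (if e = pw (even l) p i then 1 else 0)" for e
      using px py pnx' pny' pj by (simp add: wt_def sel_def)
    show ?thesis unfolding f_def by (rule val_single[where wt=wt, OF finE be bi wt])
  qed
  have wty: "wt (w 0) e = (if e = {w 0, w (Suc 0)} \<or> e = {w (m - 1), w m} then 1 else 0)" for e
    using w0 xy by (simp add: wt_def sel_def q1_def q2_def)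
  have ctry: "f (w 0) X < f (w 0) {{w 0, w (Suc 0)}} \<and> f (w 0) X < f (w 0) {{w (m - 1), w m}}"
    if "X \<subseteq> E" "{w 0, w (Suc 0)} \<notin> X" "{w (m - 1), w m} \<notin> X" for X
    unfolding f_def by (rule trap_ctr[where wt=wt, OF finE cw EdEy wty that])
  have prw': "prefers f E (w j) (if even j then {w j, w (Suc j)} else {w (j - 1), w j})"
    if "1 \<le> j" "j < m" for j using prw[OF that] by (simp add: pw_def)
  have fin: "h {p (l - 1), p l} = p l \<Longrightarrow> False"
  proof -
    assume hl: "h {p (l - 1), p l} = p l"
    have cE: "{p (l - 1), p l} \<in> E" using pE[of "l - 1"] l1 by simp
    have "p (l - 1) \<notin> set ys" using pny l1 by simp
    then have cn: "{p (l - 1), p l} \<notin> cycle_edges ys" using cyc_edge_sub[OF cw] by blast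
    show False by (rule trap[OF efx gi cw odm SVy EdEy cE _ cn prw' ctry]) (use hl pl w0 in simp)
  qed
  show False
  proof (cases "odd l")
    case True
    have wtx: "wt (z 0) e = (if e = {z 0, z (Suc 0)} \<or> e = {z (n - 1), z n} then 1 else 0)" for e
      using z0 True by (simp add: wt_def sel_def k1_def k2_def)
    have ctrx: "f (z 0) X < f (z 0) {{z 0, z (Suc 0)}} \<and> f (z 0) X < f (z 0) {{z (n - 1), z n}}"
      if "X \<subseteq> E" "{z 0, z (Suc 0)} \<notin> X" "{z (n - 1), z n} \<notin> X" for X
      unfolding f_def by (rule trap_ctr[where wt=wt, OF finE cz EdEx wtx that])
    have prz': "prefers f E (z j) (if even j then {z j, z (Suc j)} else {z (j - 1), z j})"
      if "1 \<le> j" "j < n" for j using prz[OF that] True by (simp add: pw_def)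
    have e0: "{p 0, p (Suc 0)} \<in> E" using pE l1 by simp
    have h01: "h {p 0, p (Suc 0)} = p (Suc 0)"
    proof -
      have "h {p 0, p (Suc 0)} \<in> {p 0, p (Suc 0)}" using orient[OF efx e0] .
      moreover have "h {p 0, p (Suc 0)} \<noteq> p 0"
      proof
        assume h0: "h {p 0, p (Suc 0)} = p 0"
        have "p (Suc 0) \<notin> set xs" using pnx l1 by simp
        then have cn: "{p 0, p (Suc 0)} \<notin> cycle_edges xs" using cyc_edge_sub[OF cz] by blast
        show False by (rule trap[OF efx gi cz odn SVx EdEx e0 _ cn prz' ctrx]) (use h0 p0 z0 in simp)
      qed
      ultimately show ?thesis by blast
    qed
    show False
    proof (cases "l = 1")
      case True then show False using fin h01 by simp
    next
      case False
      then have l3: "3 \<le> l" using \<open>odd l\<close> l1 by presburger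
      define T where "T = (l - 1) div 2"
      have T2: "2 * T = l - 1" using \<open>odd l\<close> l1 unfolding T_def by presburger
      have T0: "0 < T" using l3 T2 by linarith
      have ch: "t < T \<Longrightarrow> h {p (Suc (1+2*t)), p (Suc (Suc (1+2*t)))} = p (Suc (Suc (1+2*t)))" for t
      proof (rule chain[OF efx gi, where s = 1 and T = T and a = "{p 0, p (Suc 0)}"])
        show "\<And>i. i \<le> 1 + 2 * T \<Longrightarrow> p i \<in> V" using pV T2 l1 by simp
        show "\<And>i. i < 1 + 2 * T \<Longrightarrow> {p i, p (Suc i)} \<in> E" using pE T2 l1 by simp
        show "\<And>i. i < 1 + 2 * T \<Longrightarrow> p i \<noteq> p (Suc i)" using pd1 T2 l1 by simp
        show "\<And>i. i + 2 \<le> 1 + 2 * T \<Longrightarrow> p i \<noteq> p (i + 2)" using pd2 T2 l1 by simp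
        show "\<And>t. t < T \<Longrightarrow> prefers f E (p (1+2*t)) {p (1+2*t), p (Suc (1+2*t))} \<and>
                                prefers f E (p (Suc (1+2*t))) {p (1+2*t), p (Suc (1+2*t))}"
        proof -
          fix t assume t: "t < T"
          have a: "prefers f E (p (1+2*t)) {p (1+2*t), p (Suc (1+2*t))}"
            using prp[of "1+2*t"] t T2 \<open>odd l\<close> by (simp add: pw_def)
          have b: "prefers f E (p (Suc (1+2*t))) {p (1+2*t), p (Suc (1+2*t))}"
            using prp[of "Suc (1+2*t)"] t T2 \<open>odd l\<close> by (simp add: pw_def)
          show "?thesis t" using a b by blast
        qed
        show "h {p 0, p (Suc 0)} = p 1" using h01 by simp
        show "{p 0, p (Suc 0)} \<in> E" using e0 .
        show "0 < T \<Longrightarrow> {p 0, p (Suc 0)} \<noteq> {p 1, p (Suc 1)}"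
          using pd2[of 0] l3 by (auto simp: doubleton_eq_iff)
      qed
      have "h {p (Suc (1+2*(T-1))), p (Suc (Suc (1+2*(T-1))))} = p (Suc (Suc (1+2*(T-1))))"
        using ch T0 by simp
      moreover have "Suc (1+2*(T-1)) = l - 1" "Suc (Suc (1+2*(T-1))) = l" using T2 T0 l3 by linarith+
      ultimately show False using fin by simp
    qed
  next
    case False
    then have ev: "even l" by simp
    then have l2: "2 \<le> l" using l1 by presburger
    have prz': "prefers f E (z j) (if odd j then {z j, z (Suc j)} else {z (j - 1), z j})"
      if "1 \<le> j" "j < n" for j using prz[OF that] False by (simp add: pw_def)
    have F: "h {z 0, z (Suc 0)} = z 0 \<or> h {z (n - 1), z n} = z 0"
      by (rule Fgad[OF efx gi cz odn SVx EdEx prz'])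
    obtain a where aE: "a \<in> cycle_edges xs" and ha: "h a = x"
      using F z0 cyc_edge[OF cz, of 0] cyc_last[OF cz] by auto
    have p1: "p (Suc 0) \<notin> set xs" using pnx l1 by simp
    have ane: "a \<noteq> {p 0, p (Suc 0)}" using cyc_edge_sub[OF cz aE] p1 by blast
    have px: "prefers f E x {p 0, p (Suc 0)}"
    proof -
      have e0: "{p 0, p (Suc 0)} \<in> E" using pE l1 by simp
      have wt: "wt x e = (if e = {p 0, p (Suc 0)} then 1 else 0)" for e using ev by (simp add: wt_def sel_def)
      have xi: "x \<in> {p 0, p (Suc 0)}" using p0 by simp
      show ?thesis unfolding f_def by (rule val_single[where wt=wt, OF finE e0 xi wt])
    qed
    define T where "T = l div 2"
    have T2: "2 * T = l" using ev unfolding T_def by presburger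
    have T0: "0 < T" using l2 T2 by linarith
    have ch: "t < T \<Longrightarrow> h {p (Suc (0+2*t)), p (Suc (Suc (0+2*t)))} = p (Suc (Suc (0+2*t)))" for t
    proof (rule chain[OF efx gi, where s = 0 and T = T and a = a])
      show "\<And>i. i \<le> 0 + 2 * T \<Longrightarrow> p i \<in> V" using pV T2 by simp
      show "\<And>i. i < 0 + 2 * T \<Longrightarrow> {p i, p (Suc i)} \<in> E" using pE T2 by simp
      show "\<And>i. i < 0 + 2 * T \<Longrightarrow> p i \<noteq> p (Suc i)" using pd1 T2 by simp
      show "\<And>i. i + 2 \<le> 0 + 2 * T \<Longrightarrow> p i \<noteq> p (i + 2)" using pd2 T2 by simp
      show "\<And>t. t < T \<Longrightarrow> prefers f E (p (0+2*t)) {p (0+2*t), p (Suc (0+2*t))} \<and>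
                              prefers f E (p (Suc (0+2*t))) {p (0+2*t), p (Suc (0+2*t))}"
      proof -
        fix t assume t: "t < T"
        have a: "prefers f E (p (0+2*t)) {p (0+2*t), p (Suc (0+2*t))}"
        proof (cases "t = 0")
          case True then show ?thesis using px p0 by simp
        next
          case False then show ?thesis using prp[of "2*t"] t T2 ev by (simp add: pw_def)
        qed
        have b: "prefers f E (p (Suc (0+2*t))) {p (0+2*t), p (Suc (0+2*t))}"
          using prp[of "Suc (2*t)"] t T2 ev by (simp add: pw_def)
        show "?thesis t" using a b by blast
      qed
      show "h a = p 0" using ha p0 by simp
      show "a \<in> E" using aE EdEx by blast
      show "0 < T \<Longrightarrow> a \<noteq> {p 0, p (Suc 0)}" using ane by simp
    qed
    have "h {p (Suc (0+2*(T-1))), p (Suc (Suc (0+2*(T-1))))} = p (Suc (Suc (0+2*(T-1))))"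
      using ch T0 by simp
    moreover have "Suc (0+2*(T-1)) = l - 1" "Suc (Suc (0+2*(T-1))) = l" using T2 T0 by linarith+
    ultimately show False using fin by simp
  qed
qed



lemma thetaAC:
  assumes efx: "EFX_orientation V E f h" and gi: "graphical_instance V E f"
    and n3: "3 \<le> n" and m3: "3 \<le> m" and odn: "odd n" and odm: "odd m"
    and za: "z 0 = a" and zb: "z (n - 1) = b" and wa: "w 0 = a" and wb: "w (m - 1) = b"
    and zV: "\<And>i. i \<le> n - 1 \<Longrightarrow> z i \<in> V" and wV: "\<And>i. i \<le> m - 1 \<Longrightarrow> w i \<in> V"
    and zE: "\<And>i. i < n - 1 \<Longrightarrow> {z i, z (Suc i)} \<in> E"
    and wE: "\<And>i. i < m - 1 \<Longrightarrow> {w i, w (Suc i)} \<in> E"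
    and abE: "{a, b} \<in> E"
    and zne: "\<And>i j. i \<le> n - 1 \<Longrightarrow> j \<le> n - 1 \<Longrightarrow> i \<noteq> j \<Longrightarrow> z i \<noteq> z j"
    and wne: "\<And>i j. i \<le> m - 1 \<Longrightarrow> j \<le> m - 1 \<Longrightarrow> i \<noteq> j \<Longrightarrow> w i \<noteq> w j"
    and cross: "\<And>i j. 1 \<le> i \<Longrightarrow> i \<le> n - 2 \<Longrightarrow> 1 \<le> j \<Longrightarrow> j \<le> m - 2 \<Longrightarrow> z i \<noteq> w j"
    and prz: "\<And>j. 1 \<le> j \<Longrightarrow> j \<le> n - 2 \<Longrightarrow>
               prefers f E (z j) (if odd j then {z j, z (Suc j)} else {z (j - 1), z j})"
    and prw: "\<And>j. 1 \<le> j \<Longrightarrow> j \<le> m - 2 \<Longrightarrow>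
               prefers f E (w j) (if even j then {w j, w (Suc j)} else {w (j - 1), w j})"
    and ca: "\<And>X. X \<subseteq> E \<Longrightarrow> {w 0, w (Suc 0)} \<notin> X \<Longrightarrow> f a X < f a {{w 0, w (Suc 0)}}"
    and cb: "\<And>X. X \<subseteq> E \<Longrightarrow> {z (n - 2), z (n - 1)} \<notin> X \<Longrightarrow> f b X < f b {{z (n - 2), z (n - 1)}}"
  shows "h {w 0, w (Suc 0)} = w (Suc 0) \<and> h {w (m - 2), w (m - 1)} = w (m - 1)"
proof -
  define G0 where "G0 = {w 0, w (Suc 0)}"
  define AB where "AB = {a, b}"
  define Gb where "Gb = {z (n - 2), z (n - 1)}"
  have G0E: "G0 \<in> E" unfolding G0_def using wE[of 0] m3 by simp
  have GbE: "Gb \<in> E" unfolding Gb_def using zE[of "n - 2"] n3 by (simp add: Suc_diff_Suc numeral_2_eq_2)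
  have ab: "a \<noteq> b" using zne[of 0 "n - 1"] za zb n3 by simp
  have w1a: "w (Suc 0) \<noteq> a" using wne[of "Suc 0" 0] wa m3 by simp
  have w1b: "w (Suc 0) \<noteq> b" using wne[of "Suc 0" "m - 1"] wb m3 by simp
  have z1a: "z (Suc 0) \<noteq> a" using zne[of "Suc 0" 0] za n3 by simp
  have zla: "z (n - 2) \<noteq> a" using zne[of "n - 2" 0] za n3 by simp
  have zlb: "z (n - 2) \<noteq> b" using zne[of "n - 2" "n - 1"] zb n3 by simp
  have z1w1: "z (Suc 0) \<noteq> w (Suc 0)" using cross[of "Suc 0" "Suc 0"] n3 m3 by simp
  have w1V: "w (Suc 0) \<in> V" using wV[of "Suc 0"] m3 by simp
  have aV: "a \<in> V" using zV[of 0] za by simp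
  have bV: "b \<in> V" using zV[of "n - 1"] zb by simp
  have zlV: "z (n - 2) \<in> V" using zV[of "n - 2"] by simp
  have A: "h G0 = w (Suc 0)"
  proof -
    have "h G0 \<in> G0" using orient[OF efx G0E] .
    moreover have "h G0 \<noteq> a"
    proof
      assume hG0: "h G0 = a"
      have pw1: "prefers f E (w (Suc 0)) G0" using prw[of "Suc 0"] m3 by (simp add: G0_def)
      have aw1: "a \<noteq> w (Suc 0)" using w1a by simp
      have onlyG0: "g \<in> E \<Longrightarrow> h g = a \<Longrightarrow> g = G0" for g
        by (rule noharm[OF efx gi w1V aV pw1 G0E _ hG0 _ aw1])
      have ABG0: "AB \<noteq> G0" using w1a w1b unfolding AB_def G0_def by (auto simp: doubleton_eq_iff)
      have hAB: "h AB = b"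
      proof -
        have "h AB \<in> AB" using orient[OF efx abE] by (simp add: AB_def)
        moreover have "h AB \<noteq> a" using onlyG0[of AB] abE ABG0 by (auto simp: AB_def)
        ultimately show ?thesis by (auto simp: AB_def)
      qed
      define g0 where "g0 = {z 0, z (Suc 0)}"
      have g0E: "g0 \<in> E" unfolding g0_def using zE[of 0] n3 by simp
      have g0G0: "g0 \<noteq> G0" using z1a z1w1 unfolding g0_def G0_def by (auto simp: doubleton_eq_iff wa)
      have hg0: "h g0 = z (Suc 0)"
      proof -
        have "h g0 \<in> g0" using orient[OF efx g0E] .
        moreover have "h g0 \<noteq> a" using onlyG0[OF g0E] g0G0 by blast
        ultimately show ?thesis unfolding g0_def using za by auto
      qed
      have hpre: "h {z (n - 3), z (n - 2)} = z (n - 2)"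
      proof (cases "n = 3")
        case True then show ?thesis using hg0 by (simp add: g0_def numeral_3_eq_3)
      next
        case False
        then have n5: "5 \<le> n" using n3 odn by presburger
        define T where "T = (n - 3) div 2"
        have T2: "2 * T = n - 3" using odn n3 unfolding T_def by presburger
        have T0: "0 < T" using n5 T2 by linarith
        have ch: "t < T \<Longrightarrow> h {z (Suc (1+2*t)), z (Suc (Suc (1+2*t)))} = z (Suc (Suc (1+2*t)))" for t
        proof (rule chain[OF efx gi, where s = 1 and T = T and a = g0])
          show "\<And>i. i \<le> 1 + 2 * T \<Longrightarrow> z i \<in> V"
          proof -
            fix i assume "i \<le> 1 + 2 * T" then have "i \<le> n - 1" using T2 n5 by linarith
            then show "z i \<in> V" by (rule zV)
          qed
          show "\<And>i. i < 1 + 2 * T \<Longrightarrow> {z i, z (Suc i)} \<in> E"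
          proof -
            fix i assume "i < 1 + 2 * T" then have "i < n - 1" using T2 n5 by linarith
            then show "{z i, z (Suc i)} \<in> E" by (rule zE)
          qed
          show "\<And>i. i < 1 + 2 * T \<Longrightarrow> z i \<noteq> z (Suc i)"
          proof -
            fix i assume "i < 1 + 2 * T" then have "Suc i \<le> n - 1" using T2 n5 by linarith
            then show "z i \<noteq> z (Suc i)" using zne[of i "Suc i"] by simp
          qed
          show "\<And>i. i + 2 \<le> 1 + 2 * T \<Longrightarrow> z i \<noteq> z (i + 2)"
          proof -
            fix i assume "i + 2 \<le> 1 + 2 * T" then have "i + 2 \<le> n - 1" using T2 n5 by linarith
            then show "z i \<noteq> z (i + 2)" using zne[of i "i + 2"] by simp
          qed
          show "\<And>t. t < T \<Longrightarrow> prefers f E (z (1+2*t)) {z (1+2*t), z (Suc (1+2*t))} \<and>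
                                  prefers f E (z (Suc (1+2*t))) {z (1+2*t), z (Suc (1+2*t))}"
          proof -
            fix t assume t: "t < T"
            have a: "prefers f E (z (1+2*t)) {z (1+2*t), z (Suc (1+2*t))}"
              using prz[of "1+2*t"] t T2 by simp
            have b: "prefers f E (z (Suc (1+2*t))) {z (1+2*t), z (Suc (1+2*t))}"
              using prz[of "Suc (1+2*t)"] t T2 by simp
            show "?thesis t" using a b by blast
          qed
          show "h g0 = z 1" using hg0 by simp
          show "g0 \<in> E" using g0E .
          show "0 < T \<Longrightarrow> g0 \<noteq> {z 1, z (Suc 1)}"
          proof -
            have "z 0 \<noteq> z (Suc (Suc 0))" using zne[of 0 "Suc (Suc 0)"] n5 by simp
            then show ?thesis unfolding g0_def by (auto simp: doubleton_eq_iff numeral_2_eq_2)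
          qed
        qed
        have "h {z (Suc (1+2*(T-1))), z (Suc (Suc (1+2*(T-1))))} = z (Suc (Suc (1+2*(T-1))))"
          using ch T0 by simp
        moreover have "Suc (1+2*(T-1)) = n - 3" "Suc (Suc (1+2*(T-1))) = n - 2" using T2 T0 n5 by linarith+
        ultimately show ?thesis by simp
      qed
      have hGb: "h Gb \<in> Gb" using orient[OF efx GbE] .
      show False
      proof (cases "h Gb = z (n - 2)")
        case True
        have z31: "z (n - 3) \<noteq> z (n - 1)" by (rule zne) (use n3 in linarith)+
        have ne: "Gb \<noteq> {z (n - 3), z (n - 2)}"
          using z31 unfolding Gb_def by (auto simp: doubleton_eq_iff)
        have preE: "{z (n - 3), z (n - 2)} \<in> E"
          using zE[of "n - 3"] n3 by (simp add: Suc_diff_Suc numeral_3_eq_3 numeral_2_eq_2)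
        have "f b {Gb} \<le> f b (bundle_of E h b)"
          using harm[OF efx gi bV zlV GbE preE ne True hpre] .
        moreover have "Gb \<notin> bundle_of E h b" using True zlb unfolding bundle_of_def by auto
        then have "f b (bundle_of E h b) < f b {Gb}" using cb[OF bundle_sub] by (simp add: Gb_def)
        ultimately show False by linarith
      next
        case False
        then have hb: "h Gb = b" using hGb zb unfolding Gb_def by auto
        have pz: "prefers f E (z (n - 2)) Gb"
        proof -
          have "odd (n - 2)" using odn n3 by presburger
          moreover have "Suc (n - 2) = n - 1" using n3 by simp
          ultimately show ?thesis using prz[of "n - 2"] n3 by (simp add: Gb_def)
        qed
        have "AB = Gb"
          using noharm[OF efx gi zlV bV pz GbE abE[folded AB_def] hb hAB] zlb by auto
        then show False using zla zlb unfolding AB_def Gb_def by (auto simp: doubleton_eq_iff)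
      qed
    qed
    ultimately show ?thesis unfolding G0_def using wa by auto
  qed
  define G1 where "G1 = {w (Suc 0), w (Suc (Suc 0))}"
  have G1E: "G1 \<in> E" unfolding G1_def using wE[of 1] m3 by simp
  have w02: "w 0 \<noteq> w (Suc (Suc 0))" by (rule wne) (use m3 in linarith)+
  have G01: "G0 \<noteq> G1" using w02 unfolding G0_def G1_def by (auto simp: doubleton_eq_iff)
  have h1: "h G1 = w 2"
  proof -
    have "h G1 \<in> G1" using orient[OF efx G1E] .
    moreover have "h G1 \<noteq> w (Suc 0)"
    proof
      assume h1: "h G1 = w (Suc 0)"
      have "f a {G0} \<le> f a (bundle_of E h a)"
        using harm[OF efx gi aV w1V G0E G1E G01 A h1] .
      moreover have "G0 \<notin> bundle_of E h a" using A w1a unfolding bundle_of_def by auto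
      then have "f a (bundle_of E h a) < f a {G0}" using ca[OF bundle_sub] by (simp add: G0_def)
      ultimately show False by linarith
    qed
    ultimately show ?thesis unfolding G1_def by (auto simp: numeral_2_eq_2)
  qed
  have C: "h {w (m - 2), w (m - 1)} = w (m - 1)"
  proof (cases "m = 3")
    case True then show ?thesis using h1 by (simp add: G1_def numeral_2_eq_2 numeral_3_eq_3)
  next
    case False
    then have m5: "5 \<le> m" using m3 odm by presburger
    define T where "T = (m - 3) div 2"
    have T2: "2 * T = m - 3" using odm m3 unfolding T_def by presburger
    have T0: "0 < T" using m5 T2 by linarith
    have ch: "t < T \<Longrightarrow> h {w (Suc (2+2*t)), w (Suc (Suc (2+2*t)))} = w (Suc (Suc (2+2*t)))" for t
    proof (rule chain[OF efx gi, where s = 2 and T = T and a = G1])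
          show "\<And>i. i \<le> 2 + 2 * T \<Longrightarrow> w i \<in> V"
          proof -
            fix i assume "i \<le> 2 + 2 * T" then have "i \<le> m - 1" using T2 m5 by linarith
            then show "w i \<in> V" by (rule wV)
          qed
          show "\<And>i. i < 2 + 2 * T \<Longrightarrow> {w i, w (Suc i)} \<in> E"
          proof -
            fix i assume "i < 2 + 2 * T" then have "i < m - 1" using T2 m5 by linarith
            then show "{w i, w (Suc i)} \<in> E" by (rule wE)
          qed
          show "\<And>i. i < 2 + 2 * T \<Longrightarrow> w i \<noteq> w (Suc i)"
          proof -
            fix i assume "i < 2 + 2 * T" then have "Suc i \<le> m - 1" using T2 m5 by linarith
            then show "w i \<noteq> w (Suc i)" using wne[of i "Suc i"] by simp
          qed
          show "\<And>i. i + 2 \<le> 2 + 2 * T \<Longrightarrow> w i \<noteq> w (i + 2)"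
          proof -
            fix i assume "i + 2 \<le> 2 + 2 * T" then have "i + 2 \<le> m - 1" using T2 m5 by linarith
            then show "w i \<noteq> w (i + 2)" using wne[of i "i + 2"] by simp
          qed
      show "\<And>t. t < T \<Longrightarrow> prefers f E (w (2+2*t)) {w (2+2*t), w (Suc (2+2*t))} \<and>
                              prefers f E (w (Suc (2+2*t))) {w (2+2*t), w (Suc (2+2*t))}"
      proof -
        fix t assume t: "t < T"
        have a: "prefers f E (w (2+2*t)) {w (2+2*t), w (Suc (2+2*t))}"
          using prw[of "2+2*t"] t T2 by simp
        have b: "prefers f E (w (Suc (2+2*t))) {w (2+2*t), w (Suc (2+2*t))}"
          using prw[of "Suc (2+2*t)"] t T2 by simp
        show "?thesis t" using a b by blast
      qed
      show "h G1 = w 2" using h1 .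
      show "G1 \<in> E" using G1E .
      show "0 < T \<Longrightarrow> G1 \<noteq> {w 2, w (Suc 2)}"
      proof -
        have "w (Suc 0) \<noteq> w (Suc (Suc (Suc 0)))" using wne[of "Suc 0" "Suc (Suc (Suc 0))"] m5 by simp
        then show ?thesis unfolding G1_def by (auto simp: doubleton_eq_iff numeral_2_eq_2)
      qed
    qed
    have "h {w (Suc (2+2*(T-1))), w (Suc (Suc (2+2*(T-1))))} = w (Suc (Suc (2+2*(T-1))))"
      using ch T0 by simp
    moreover have "Suc (2+2*(T-1)) = m - 2" "Suc (Suc (2+2*(T-1))) = m - 1" using T2 T0 m5 by linarith+
    ultimately show ?thesis by simp
  qed
  show ?thesis using A C by (simp add: G0_def)
qed



lemma if_nn: "0 \<le> x \<Longrightarrow> 0 \<le> y \<Longrightarrow> (0::real) \<le> (if P then x else y)"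
  by simp

lemma case_edge:
  assumes "two_odd_cycles_sharing_edge V E"
  shows "\<not> strongly_EFX_orientable V E"
proof
  assume strong: "strongly_EFX_orientable V E"
  obtain xs ys a b where ox: "is_odd_cycle xs" and oy: "is_odd_cycle ys" and int: "set xs \<inter> set ys = {a, b}"
    and ab: "a \<noteq> b" and abx: "{a, b} \<in> cycle_edges xs" and aby: "{a, b} \<in> cycle_edges ys"
    and V: "V = set xs \<union> set ys" and E: "E = cycle_edges xs \<union> cycle_edges ys"
    using assms unfolding two_odd_cycles_sharing_edge_def by blast
  define n where "n = length xs"
  define m where "m = length ys"
  have odn: "odd n" and odm: "odd m" using ox oy by (auto simp: is_odd_cycle_def n_def m_def)
  have cx0: "cyc (\<lambda>j. xs ! (j mod n)) n (set xs) (cycle_edges xs)"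
    using cyc_list ox unfolding is_odd_cycle_def n_def by blast
  have cy0: "cyc (\<lambda>j. ys ! (j mod m)) m (set ys) (cycle_edges ys)"
    using cyc_list oy unfolding is_odd_cycle_def m_def by blast
  obtain z where cz: "cyc z n (set xs) (cycle_edges xs)" and z0: "z 0 = a" and zb: "z (n - 1) = b"
    using cyc_orient[OF cx0 abx] by blast
  obtain w where cw: "cyc w m (set ys) (cycle_edges ys)" and w0: "w 0 = a" and wb: "w (m - 1) = b"
    using cyc_orient[OF cy0 aby] by blast
  have n3: "3 \<le> n" using cyc_n[OF cz] .
  have m3: "3 \<le> m" using cyc_n[OF cw] .
  have finE: "finite E" using cyc_fin[OF cz] cyc_fin[OF cw] E by simp
  have zV: "z i \<in> V" for i using cyc_mem[OF cz] V by blast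
  have wV: "w i \<in> V" for i using cyc_mem[OF cw] V by blast
  have zE: "{z i, z (Suc i)} \<in> E" for i using cyc_edge[OF cz] E by blast
  have wE: "{w i, w (Suc i)} \<in> E" for i using cyc_edge[OF cw] E by blast
  have abE: "{a, b} \<in> E" using abx E by blast
  have zne: "z i \<noteq> z j" if "i \<le> n - 1" "j \<le> n - 1" "i \<noteq> j" for i j
    using that n3 cyc_eq[OF cz, of i j] by simp
  have wne: "w i \<noteq> w j" if "i \<le> m - 1" "j \<le> m - 1" "i \<noteq> j" for i j
    using that m3 cyc_eq[OF cw, of i j] by simp
  have zin: "z i \<notin> set ys" if "1 \<le> i" "i \<le> n - 2" for i
  proof
    assume "z i \<in> set ys"
    then have "z i \<in> {a, b}" using int cyc_mem[OF cz] by blast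
    moreover have "z i \<noteq> z 0" by (rule zne) (use that n3 in linarith)+
    moreover have "z i \<noteq> z (n - 1)" by (rule zne) (use that n3 in linarith)+
    ultimately show False using z0 zb by auto
  qed
  have win: "w i \<notin> set xs" if "1 \<le> i" "i \<le> m - 2" for i
  proof
    assume "w i \<in> set xs"
    then have "w i \<in> {a, b}" using int cyc_mem[OF cw] by blast
    moreover have "w i \<noteq> w 0" by (rule wne) (use that m3 in linarith)+
    moreover have "w i \<noteq> w (m - 1)" by (rule wne) (use that m3 in linarith)+
    ultimately show False using w0 wb by auto
  qed
  have cross: "z i \<noteq> w j" if "1 \<le> i" "i \<le> n - 2" "1 \<le> j" "j \<le> m - 2" for i j
    using zin[OF that(1,2)] cyc_mem[OF cw, of j] by auto
  define G0 where "G0 = {w 0, w (Suc 0)}"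
  define Gb where "Gb = {z (n - 2), z (n - 1)}"
  define AB where "AB = {a, b}"
  define wt where "wt v e = (if v = a then (if e = G0 then 2 else if e = AB then 1 else 0)
      else if v = b then (if e = Gb then 2 else if e = AB then 1 else 0)
      else if v \<in> set xs then (if e = pw False z (pos z n v) then 1 else 0)
      else (if e = pw True w (pos w m v) then (1::real) else 0))" for v e
  define f where "f = val E wt"
  have gi: "graphical_instance V E f" unfolding f_def
    by (rule val_inst[OF finE]) (unfold wt_def, intro if_nn, simp_all)
  obtain h where efx: "EFX_orientation V E f h"
    using strong gi unfolding strongly_EFX_orientable_def by blast
  have prz: "prefers f E (z j) (if odd j then {z j, z (Suc j)} else {z (j - 1), z j})"
    if j: "1 \<le> j" "j \<le> n - 2" for j
  proof -
    have za: "z j \<noteq> a" using zne[of j 0] j n3 z0 by simp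
    have zb': "z j \<noteq> b" using zne[of j "n - 1"] j n3 zb by simp
    have pj: "pos z n (z j) = j" using pos_cyc[OF cz] j n3 by simp
    have be: "pw False z j \<in> E" using E pw_edge[OF cz j(1)] by blast
    have bi: "z j \<in> pw False z j" using pw_edge[OF cz j(1)] by blast
    have wt: "wt (z j) e = (if e = pw False z j then 1 else 0)" for e
      using za zb' pj cyc_mem[OF cz, of j] by (simp add: wt_def)
    have "prefers f E (z j) (pw False z j)" unfolding f_def by (rule val_single[where wt=wt, OF finE be bi wt])
    then show ?thesis by (simp add: pw_def)
  qed
  have prw: "prefers f E (w j) (if even j then {w j, w (Suc j)} else {w (j - 1), w j})"
    if j: "1 \<le> j" "j \<le> m - 2" for j
  proof -
    have wa: "w j \<noteq> a" using wne[of j 0] j m3 w0 by simp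
    have wb': "w j \<noteq> b" using wne[of j "m - 1"] j m3 wb by simp
    have pj: "pos w m (w j) = j" using pos_cyc[OF cw] j m3 by simp
    have be: "pw True w j \<in> E" using E pw_edge[OF cw j(1)] by blast
    have bi: "w j \<in> pw True w j" using pw_edge[OF cw j(1)] by blast
    have wt: "wt (w j) e = (if e = pw True w j then 1 else 0)" for e
      using wa wb' pj win[OF j] by (simp add: wt_def)
    have "prefers f E (w j) (pw True w j)" unfolding f_def by (rule val_single[where wt=wt, OF finE be bi wt])
    then show ?thesis by (simp add: pw_def)
  qed
  have w1a: "w (Suc 0) \<noteq> a" using wne[of "Suc 0" 0] w0 m3 by simp
  have w1b: "w (Suc 0) \<noteq> b" using wne[of "Suc 0" "m - 1"] wb m3 by simp
  have zla: "z (n - 2) \<noteq> a" using zne[of "n - 2" 0] z0 n3 by simp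
  have zlb: "z (n - 2) \<noteq> b" using zne[of "n - 2" "n - 1"] zb n3 by simp
  have G0E: "G0 \<in> E" unfolding G0_def using wE .
  have GbE: "Gb \<in> E" unfolding Gb_def using zE[of "n - 2"] n3 by (simp add: Suc_diff_Suc numeral_2_eq_2)
  have ABE: "AB \<in> E" unfolding AB_def using abE .
  have G0AB: "G0 \<noteq> AB" using w1a w1b unfolding G0_def AB_def by (auto simp: doubleton_eq_iff)
  have GbAB: "Gb \<noteq> AB" using zla zlb unfolding Gb_def AB_def by (auto simp: doubleton_eq_iff)
  have aG0: "a \<in> G0" using w0 by (simp add: G0_def)
  have bGb: "b \<in> Gb" using zb by (simp add: Gb_def)
  have aAB: "a \<in> AB" and bAB: "b \<in> AB" by (simp_all add: AB_def)
  have wta0: "\<And>e. e \<noteq> G0 \<Longrightarrow> e \<noteq> AB \<Longrightarrow> wt a e = 0" by (simp add: wt_def)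
  have wtb0: "\<And>e. e \<noteq> Gb \<Longrightarrow> e \<noteq> AB \<Longrightarrow> wt b e = 0" using ab by (simp add: wt_def)
  have fa: "f a X = (if G0 \<in> X then 2 else 0) + (if AB \<in> X then 1 else 0)" if "X \<subseteq> E" for X
    unfolding f_def using val_pair[where wt=wt, OF finE G0E ABE aG0 aAB G0AB wta0 that] G0AB
    by (simp add: wt_def)
  have fb: "f b X = (if Gb \<in> X then 2 else 0) + (if AB \<in> X then 1 else 0)" if "X \<subseteq> E" for X
    unfolding f_def using val_pair[where wt=wt, OF finE GbE ABE bGb bAB GbAB wtb0 that] GbAB ab
    by (simp add: wt_def)
  have ca: "f a X < f a {{w 0, w (Suc 0)}}" if "X \<subseteq> E" "{w 0, w (Suc 0)} \<notin> X" for X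
    using fa[OF that(1)] fa[of "{G0}"] G0E G0AB that(2) by (simp add: G0_def)
  have cb: "f b X < f b {{z (n - 2), z (n - 1)}}" if "X \<subseteq> E" "{z (n - 2), z (n - 1)} \<notin> X" for X
    using fb[OF that(1)] fb[of "{Gb}"] GbE GbAB that(2) by (simp add: Gb_def)
  have AC: "h {w 0, w (Suc 0)} = w (Suc 0) \<and> h {w (m - 2), w (m - 1)} = w (m - 1)"
    by (rule thetaAC[OF efx gi n3 m3 odn odm z0 zb w0 wb zV wV zE wE abE zne wne cross prz prw ca cb])
  define zr where "zr t = w (m - 1 - t)" for t
  define wr where "wr t = z (n - 1 - t)" for t
  have zr0: "zr 0 = b" using wb by (simp add: zr_def)
  have zrl: "zr (m - 1) = a" using w0 by (simp add: zr_def)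
  have wr0: "wr 0 = b" using zb by (simp add: wr_def)
  have wrl: "wr (n - 1) = a" using z0 by (simp add: wr_def)
  have zrV: "zr i \<in> V" for i using wV by (simp add: zr_def)
  have wrV: "wr i \<in> V" for i using zV by (simp add: wr_def)
  have zrE: "{zr i, zr (Suc i)} \<in> E" if "i < m - 1" for i
  proof -
    have "Suc (m - 1 - Suc i) = m - 1 - i" using that by simp
    then have "{w (m - 1 - Suc i), w (m - 1 - i)} \<in> E" using wE[of "m - 1 - Suc i"] by simp
    then show ?thesis by (simp add: zr_def insert_commute)
  qed
  have wrE: "{wr i, wr (Suc i)} \<in> E" if "i < n - 1" for i
  proof -
    have "Suc (n - 1 - Suc i) = n - 1 - i" using that by simp
    then have "{z (n - 1 - Suc i), z (n - 1 - i)} \<in> E" using zE[of "n - 1 - Suc i"] by simp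
    then show ?thesis by (simp add: wr_def insert_commute)
  qed
  have baE: "{b, a} \<in> E" using abE by (simp add: insert_commute)
  have zrne: "zr i \<noteq> zr j" if "i \<le> m - 1" "j \<le> m - 1" "i \<noteq> j" for i j
    unfolding zr_def by (rule wne) (use that in linarith)+
  have wrne: "wr i \<noteq> wr j" if "i \<le> n - 1" "j \<le> n - 1" "i \<noteq> j" for i j
    unfolding wr_def by (rule zne) (use that in linarith)+
  have crossr: "zr i \<noteq> wr j" if "1 \<le> i" "i \<le> m - 2" "1 \<le> j" "j \<le> n - 2" for i j
  proof -
    have "z (n - 1 - j) \<noteq> w (m - 1 - i)" by (rule cross) (use that n3 m3 in linarith)+
    then show ?thesis by (simp add: zr_def wr_def)
  qed
  have przr: "prefers f E (zr j) (if odd j then {zr j, zr (Suc j)} else {zr (j - 1), zr j})"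
    if j: "1 \<le> j" "j \<le> m - 2" for j
  proof -
    define k where "k = m - 1 - j"
    have k: "1 \<le> k" "k \<le> m - 2" using j m3 by (simp_all add: k_def)
    have par: "odd j \<longleftrightarrow> odd k" using odm j m3 unfolding k_def by presburger
    have r1: "zr j = w k" by (simp add: zr_def k_def)
    have i2: "m - 1 - Suc j = k - 1" using j m3 unfolding k_def by linarith
    have r2: "zr (Suc j) = w (k - 1)" unfolding zr_def i2 ..
    have i3: "m - 1 - (j - 1) = Suc k" using j m3 unfolding k_def by linarith
    have r3: "zr (j - 1) = w (Suc k)" unfolding zr_def i3 ..
    have p: "prefers f E (w k) (if even k then {w k, w (Suc k)} else {w (k - 1), w k})" using prw[OF k] .
    show ?thesis
    proof (cases "odd j")
      case True
      then have "odd k" using par by simp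
      then have "prefers f E (w k) {w (k - 1), w k}" using p by simp
      moreover have "{w (k - 1), w k} = {w k, w (k - 1)}" by (rule insert_commute)
      ultimately show ?thesis using True unfolding r1 r2 by simp
    next
      case False
      then have "even k" using par by simp
      then have "prefers f E (w k) {w k, w (Suc k)}" using p by simp
      moreover have "{w k, w (Suc k)} = {w (Suc k), w k}" by (rule insert_commute)
      ultimately show ?thesis using False unfolding r1 r3 by simp
    qed
  qed
  have prwr: "prefers f E (wr j) (if even j then {wr j, wr (Suc j)} else {wr (j - 1), wr j})"
    if j: "1 \<le> j" "j \<le> n - 2" for j
  proof -
    define k where "k = n - 1 - j"
    have k: "1 \<le> k" "k \<le> n - 2" using j n3 by (simp_all add: k_def)
    have par: "odd j \<longleftrightarrow> odd k" using odn j n3 unfolding k_def by presburger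
    have r1: "wr j = z k" by (simp add: wr_def k_def)
    have i2: "n - 1 - Suc j = k - 1" using j n3 unfolding k_def by linarith
    have r2: "wr (Suc j) = z (k - 1)" unfolding wr_def i2 ..
    have i3: "n - 1 - (j - 1) = Suc k" using j n3 unfolding k_def by linarith
    have r3: "wr (j - 1) = z (Suc k)" unfolding wr_def i3 ..
    have p: "prefers f E (z k) (if odd k then {z k, z (Suc k)} else {z (k - 1), z k})" using prz[OF k] .
    show ?thesis
    proof (cases "odd j")
      case True
      then have "odd k" using par by simp
      then have "prefers f E (z k) {z k, z (Suc k)}" using p by simp
      moreover have "{z k, z (Suc k)} = {z (Suc k), z k}" by (rule insert_commute)
      ultimately show ?thesis using True unfolding r1 r3 by simp
    next
      case False
      then have "even k" using par by simp
      then have "prefers f E (z k) {z (k - 1), z k}" using p by simp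
      moreover have "{z (k - 1), z k} = {z k, z (k - 1)}" by (rule insert_commute)
      ultimately show ?thesis using False unfolding r1 r2 by simp
    qed
  qed
  have car: "f b X < f b {{wr 0, wr (Suc 0)}}" if "X \<subseteq> E" "{wr 0, wr (Suc 0)} \<notin> X" for X
  proof -
    have eq: "{wr 0, wr (Suc 0)} = {z (n - 2), z (n - 1)}" by (simp add: wr_def insert_commute numeral_2_eq_2)
    show ?thesis using cb[OF that(1)] that(2) unfolding eq by simp
  qed
  have cbr: "f a X < f a {{zr (m - 2), zr (m - 1)}}" if "X \<subseteq> E" "{zr (m - 2), zr (m - 1)} \<notin> X" for X
  proof -
    have "m - 1 - (m - 2) = Suc 0" using m3 by simp
    then have eq: "{zr (m - 2), zr (m - 1)} = {w 0, w (Suc 0)}" by (simp add: zr_def insert_commute)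
    show ?thesis using ca[OF that(1)] that(2) unfolding eq by simp
  qed
  have BD: "h {wr 0, wr (Suc 0)} = wr (Suc 0) \<and> h {wr (n - 2), wr (n - 1)} = wr (n - 1)"
    by (rule thetaAC[OF efx gi m3 n3 odm odn zr0 zrl wr0 wrl zrV wrV zrE wrE baE zrne wrne crossr
          przr prwr car cbr])
  have hA: "h G0 = w (Suc 0)" using AC by (simp add: G0_def)
  have hC: "h {w (m - 2), w (m - 1)} = b" using AC wb by simp
  have hB: "h Gb = z (n - 2)"
  proof -
    have "{wr 0, wr (Suc 0)} = Gb" by (simp add: wr_def Gb_def insert_commute numeral_2_eq_2)
    moreover have "wr (Suc 0) = z (n - 2)" by (simp add: wr_def numeral_2_eq_2)
    ultimately show ?thesis using BD by simp
  qed
  have hD: "h {z 0, z (Suc 0)} = a"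
  proof -
    have "n - 1 - (n - 2) = Suc 0" using n3 by simp
    then have "{wr (n - 2), wr (n - 1)} = {z 0, z (Suc 0)}" by (simp add: wr_def insert_commute)
    moreover have "wr (n - 1) = a" using wrl .
    ultimately show ?thesis using BD by simp
  qed
  have aV: "a \<in> V" and bV: "b \<in> V" using zV[of 0] zV[of "n - 1"] z0 zb by auto
  have hAB: "h AB \<in> AB" using orient[OF efx ABE] .
  show False
  proof (cases "h AB = a")
    case True
    have g0E: "{z 0, z (Suc 0)} \<in> E" using zE .
    have z1b: "z (Suc 0) \<noteq> b" using zne[of "Suc 0" "n - 1"] zb n3 by simp
    have ne: "AB \<noteq> {z 0, z (Suc 0)}" using z1b ab z0 unfolding AB_def by (auto simp: doubleton_eq_iff)
    have "f b {AB} \<le> f b (bundle_of E h b)" using harm[OF efx gi bV aV ABE g0E ne True hD] .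
    moreover have "AB \<notin> bundle_of E h b" using True ab unfolding bundle_of_def by auto
    moreover have "Gb \<notin> bundle_of E h b" using hB zlb unfolding bundle_of_def by auto
    ultimately show False using fb[OF bundle_sub] fb[of "{AB}"] ABE GbAB by simp
  next
    case False
    then have hb: "h AB = b" using hAB unfolding AB_def by auto
    have gE: "{w (m - 2), w (m - 1)} \<in> E"
      using wE[of "m - 2"] m3 by (simp add: Suc_diff_Suc numeral_2_eq_2)
    have wla: "w (m - 2) \<noteq> a" using wne[of "m - 2" 0] w0 m3 by simp
    have ne: "AB \<noteq> {w (m - 2), w (m - 1)}" using wla ab wb unfolding AB_def by (auto simp: doubleton_eq_iff)
    have "f a {AB} \<le> f a (bundle_of E h a)" using harm[OF efx gi aV bV ABE gE ne hb hC] .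
    moreover have "AB \<notin> bundle_of E h a" using hb ab unfolding bundle_of_def by auto
    moreover have "G0 \<notin> bundle_of E h a" using hA w1a unfolding bundle_of_def by auto
    ultimately show False using fa[OF bundle_sub] fa[of "{AB}"] ABE G0AB by simp
  qed
qed


theorem mainTheorem13:
  fixes V :: "'v set" and E :: "'v set set"
  shows "(two_odd_cycles_sharing_edge V E \<longrightarrow> \<not> strongly_EFX_orientable V E) \<and>
         (two_odd_cycles_sharing_vertex V E \<longrightarrow> \<not> strongly_EFX_orientable V E) \<and>
         (two_odd_cycles_joined_by_path V E \<longrightarrow> \<not> strongly_EFX_orientable V E)"
  using case_edge[of V E] case_vertex[of V E] case_path[of V E] by blast

end
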